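(* Let $\mathcal{M}$ be a relative category. Then $N_\xi\mathcal{M}$ is Reedy fibrant if and only if, for all $n\ge1$, $m\ge0$ and $0\le k\le n$, every relative functor $\mathcal{S}_{k,n,m}\to\mathcal{M}$ extends to a relative functor $\xi(\hat{\underline n}\times\check{\underline m})\to\mathcal{M}$, where $\mathcal{S}_{k,n,m}\subseteq\xi(\hat{\underline n}\times\check{\underline m})$ is the full relative subposet $c\mathrm{Sd}^2(\Lambda^k[n]\times\Delta[m]\cup_{\Lambda^k[n]\times\partial\Delta[m]}\Delta[n]\times\partial\Delta[m])$ described below.
   Context: A relative category is a category with a subcategory of weak equivalences containing all objects; relative functors preserve weak equivalences; $\mathrm{RelCat}$ is their category. For a poset $P$ with a relative structure, $\xi P$ is the relative poset whose objects are strictly increasing sequences $A_0\subsetneq\dots\subsetneq A_r$ ($r\ge0$) of non-empty finite totally ordered subsets of $P$, with $B_\bullet\le A_\bullet$ iff each $B_j$ occurs among the $A_i$, a weak equivalence iff $\min B_0\le\min A_0$ is a weak equivalence of $P$. Here $\underline p=(0<\dots<p)$, $\check{\underline p}$ has only identities as weak equivalences, $\hat{\underline q}$ has all morphisms as weak equivalences, and products carry componentwise weak equivalences; so in $\hat{\underline n}\times\check{\underline m}$ the relation $(a,u)\le(a',u')$ is a weak equivalence iff $u=u'$. The underlying poset of $\xi(\hat{\underline n}\times\check{\underline m})$ is $c\mathrm{Sd}^2(\Delta[n]\times\Delta[m])$ ($c$ = fundamental category, $\mathrm{Sd}$ = barycentric subdivision). A totally ordered subset $S$ of $[n]\times[m]$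 lies in $\Lambda^k[n]\times\Delta[m]\cup\Delta[n]\times\partial\Delta[m]$ iff its set of first coordinates is neither $[n]$ nor $[n]\setminus\{k\}$ or its set of second coordinates is not all of $[m]$; $\mathcal{S}_{k,n,m}$ is the full subposet of chains $A_0\subsetneq\dots\subsetneq A_r$ whose largest member $A_r$ has this property, with the induced relative structure. $N_\xi\mathcal{M}$ is the bisimplicial set $(p,q)\mapsto\mathrm{RelCat}(\xi(\check{\underline p}\times\hat{\underline q}),\mathcal{M})$; viewed as the simplicial object $p\mapsto(N_\xi\mathcal{M})_{p\bullet}$ in simplicial sets, it is Reedy fibrant if all matching maps are Kan fibrations. *)

theory Defs
  imports Main
begin

record ('o, 'm) relcat =
  Ob   :: "'o set"
  Ar   :: "'m set"
  Dom  :: "'m \<Rightarrow> 'o"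
  Cod  :: "'m \<Rightarrow> 'o"
  Comp :: "'m \<Rightarrow> 'm \<Rightarrow> 'm"   (* Comp g f = g o f *)
  Idm  :: "'o \<Rightarrow> 'm"
  We   :: "'m set"

definition is_relcat :: "('o, 'm) relcat \<Rightarrow> bool" where
  "is_relcat M \<longleftrightarrow>
     (\<forall>f\<in>Ar M. Dom M f \<in> Ob M \<and> Cod M f \<in> Ob M) \<and>
     (\<forall>x\<in>Ob M. Idm M x \<in> Ar M \<and> Dom M (Idm M x) = x \<and> Cod M (Idm M x) = x) \<and>
     (\<forall>f\<in>Ar M. \<forall>g\<in>Ar M. Cod M f = Dom M g \<longrightarrow>
        Comp M g f \<in> Ar M \<and> Dom M (Comp M g f) = Dom M f \<and> Cod M (Comp M g f) = Cod M g) \<and>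
     (\<forall>f\<in>Ar M. Comp M (Idm M (Cod M f)) f = f \<and> Comp M f (Idm M (Dom M f)) = f) \<and>
     (\<forall>f\<in>Ar M. \<forall>g\<in>Ar M. \<forall>h\<in>Ar M. Cod M f = Dom M g \<longrightarrow> Cod M g = Dom M h \<longrightarrow>
        Comp M h (Comp M g f) = Comp M (Comp M h g) f) \<and>
     We M \<subseteq> Ar M \<and>
     (\<forall>x\<in>Ob M. Idm M x \<in> We M) \<and>
     (\<forall>f\<in>We M. \<forall>g\<in>We M. Cod M f = Dom M g \<longrightarrow> Comp M g f \<in> We M)"

record 'p relposet =
  pcar :: "'p set"
  ple  :: "'p \<Rightarrow> 'p \<Rightarrow> bool"
  pwe  :: "'p \<Rightarrow> 'p \<Rightarrow> bool"

text \<open>A functor from a poset P to M is given by its value F p q on each relation p \<le> q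
  (objects are recovered as domains of identities); it is extensional (undefined elsewhere).\<close>
definition relfun :: "'p relposet \<Rightarrow> ('o, 'm) relcat \<Rightarrow> ('p \<Rightarrow> 'p \<Rightarrow> 'm) \<Rightarrow> bool" where
  "relfun P M F \<longleftrightarrow>
     (\<forall>p\<in>pcar P. \<forall>q\<in>pcar P. ple P p q \<longrightarrow>
        F p q \<in> Ar M \<and> Dom M (F p q) = Dom M (F p p) \<and> Cod M (F p q) = Dom M (F q q)) \<and>
     (\<forall>p\<in>pcar P. F p p = Idm M (Dom M (F p p))) \<and>
     (\<forall>p\<in>pcar P. \<forall>q\<in>pcar P. \<forall>r\<in>pcar P. ple P p q \<longrightarrow> ple P q r \<longrightarrow>
        Comp M (F q r) (F p q) = F p r) \<and>
     (\<forall>p\<in>pcar P. \<forall>q\<in>pcar P. pwe P p q \<longrightarrow> F p q \<in> We M) \<and>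
     (\<forall>p q. \<not> (p \<in> pcar P \<and> q \<in> pcar P \<and> ple P p q) \<longrightarrow> F p q = undefined)"

definition chain_min :: "('p \<Rightarrow> 'p \<Rightarrow> bool) \<Rightarrow> 'p set \<Rightarrow> 'p" where
  "chain_min le S = (THE x. x \<in> S \<and> (\<forall>y\<in>S. le x y))"

definition xi_chain :: "'p relposet \<Rightarrow> 'p set list \<Rightarrow> bool" where
  "xi_chain P As \<longleftrightarrow> As \<noteq> [] \<and>
     (\<forall>A\<in>set As. A \<noteq> {} \<and> finite A \<and> A \<subseteq> pcar P \<and>
        (\<forall>x\<in>A. \<forall>y\<in>A. ple P x y \<or> ple P y x)) \<and>
     sorted_wrt (\<subset>) As"

text \<open>Objects: chains A_0 < ... < A_r (as lists); B \<le> A iff every B_j occurs among the A_i;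
  weak equivalence iff moreover min B_0 \<le> min A_0 is a weak equivalence of P.\<close>
definition xi :: "'p relposet \<Rightarrow> 'p set list relposet" where
  "xi P = \<lparr> pcar = {As. xi_chain P As},
            ple = (\<lambda>Bs As. set Bs \<subseteq> set As),
            pwe = (\<lambda>Bs As. set Bs \<subseteq> set As \<and>
                     pwe P (chain_min (ple P) (hd Bs)) (chain_min (ple P) (hd As))) \<rparr>"

definition grid_le :: "nat \<times> nat \<Rightarrow> nat \<times> nat \<Rightarrow> bool" where
  "grid_le x y \<longleftrightarrow> fst x \<le> fst y \<and> snd x \<le> snd y"

text \<open>check p times hat q: weak equivalences are the relations with equal first coordinate.\<close>
definition check_hat :: "nat \<Rightarrow> nat \<Rightarrow> (nat \<times> nat) relposet" where
  "check_hat p q = \<lparr> pcar = {0..p} \<times> {0..q}, ple = grid_le,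
                     pwe = (\<lambda>x y. grid_le x y \<and> fst x = fst y) \<rparr>"

text \<open>hat n times check m: weak equivalences are the relations with equal second coordinate.\<close>
definition hat_check :: "nat \<Rightarrow> nat \<Rightarrow> (nat \<times> nat) relposet" where
  "hat_check n m = \<lparr> pcar = {0..n} \<times> {0..m}, ple = grid_le,
                     pwe = (\<lambda>x y. grid_le x y \<and> snd x = snd y) \<rparr>"

definition NX :: "('o, 'm) relcat \<Rightarrow> nat \<Rightarrow> nat \<Rightarrow> ((nat \<times> nat) set list \<Rightarrow> (nat \<times> nat) set list \<Rightarrow> 'm) set" where
  "NX M p q = {F. relfun (xi (check_hat p q)) M F}"

text \<open>Image of a chain under a monotone map (repetitions removed): the functoriality of xi.\<close>
definition ximg :: "('a \<Rightarrow> 'b) \<Rightarrow> 'a set list \<Rightarrow> 'b set list" where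
  "ximg f As = remdups_adj (map (\<lambda>A. f ` A) As)"

text \<open>Simplicial operator induced by \<open>\<alpha> : [p'] \<rightarrow> [p]\<close>, \<open>\<beta> : [q'] \<rightarrow> [q]\<close>:
  precomposition with xi(\<alpha> \<times> \<beta>).\<close>
definition NXmap :: "nat \<Rightarrow> nat \<Rightarrow> (nat \<Rightarrow> nat) \<Rightarrow> (nat \<Rightarrow> nat) \<Rightarrow>
    ((nat \<times> nat) set list \<Rightarrow> (nat \<times> nat) set list \<Rightarrow> 'm) \<Rightarrow>
    ((nat \<times> nat) set list \<Rightarrow> (nat \<times> nat) set list \<Rightarrow> 'm)" where
  "NXmap p' q' \<alpha> \<beta> F = (\<lambda>Bs As.
     if Bs \<in> pcar (xi (check_hat p' q')) \<and> As \<in> pcar (xi (check_hat p' q')) \<and> set Bs \<subseteq> set As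
     then F (ximg (map_prod \<alpha> \<beta>) Bs) (ximg (map_prod \<alpha> \<beta>) As) else undefined)"

definition coface :: "nat \<Rightarrow> nat \<Rightarrow> nat" where
  "coface i j = (if j < i then j else Suc j)"

text \<open>Horizontal face d_i : (N_xi M)_{p,q} \<rightarrow> (N_xi M)_{p-1,q} and vertical face
  d_j : (N_xi M)_{p,q} \<rightarrow> (N_xi M)_{p,q-1}.\<close>
definition hface :: "nat \<Rightarrow> nat \<Rightarrow> nat \<Rightarrow> ((nat \<times> nat) set list \<Rightarrow> (nat \<times> nat) set list \<Rightarrow> 'm) \<Rightarrow>
    ((nat \<times> nat) set list \<Rightarrow> (nat \<times> nat) set list \<Rightarrow> 'm)" where
  "hface p q i F = NXmap (p - 1) q (coface i) id F"

definition vface :: "nat \<Rightarrow> nat \<Rightarrow> nat \<Rightarrow> ((nat \<times> nat) set list \<Rightarrow> (nat \<times> nat) set list \<Rightarrow> 'm) \<Rightarrow>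
    ((nat \<times> nat) set list \<Rightarrow> (nat \<times> nat) set list \<Rightarrow> 'm)" where
  "vface p q j F = NXmap p (q - 1) id (coface j) F"

text \<open>A map f of simplicial sets E \<rightarrow> B (given by q-simplices E q, faces dE q j : E_q \<rightarrow> E_{q-1})
  is a Kan fibration iff it has the right lifting property against all horn inclusions
  \<open>\<Lambda>\<^sup>k[q] \<rightarrow> \<Delta>[q]\<close>, q \<ge> 1; maps out of the horn are compatible families of faces.\<close>
definition kan_fibration :: "(nat \<Rightarrow> 'e set) \<Rightarrow> (nat \<Rightarrow> nat \<Rightarrow> 'e \<Rightarrow> 'e) \<Rightarrow>
    (nat \<Rightarrow> 'b set) \<Rightarrow> (nat \<Rightarrow> nat \<Rightarrow> 'b \<Rightarrow> 'b) \<Rightarrow> (nat \<Rightarrow> 'e \<Rightarrow> 'b) \<Rightarrow> bool" where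
  "kan_fibration E dE B dB f \<longleftrightarrow>
     (\<forall>q k y b. 1 \<le> q \<longrightarrow> k \<le> q \<longrightarrow>
        (\<forall>j\<le>q. j \<noteq> k \<longrightarrow> y j \<in> E (q - 1)) \<longrightarrow>
        (\<forall>i j. i < j \<longrightarrow> j \<le> q \<longrightarrow> i \<noteq> k \<longrightarrow> j \<noteq> k \<longrightarrow>
            dE (q - 1) i (y j) = dE (q - 1) (j - 1) (y i)) \<longrightarrow>
        b \<in> B q \<longrightarrow>
        (\<forall>j\<le>q. j \<noteq> k \<longrightarrow> dB q j b = f (q - 1) (y j)) \<longrightarrow>
        (\<exists>x\<in>E q. (\<forall>j\<le>q. j \<noteq> k \<longrightarrow> dE q j x = y j) \<and> f q x = b))"

text \<open>Matching object \<open>(M_p X)_q\<close> of the simplicial object \<open>p \<mapsto> (N_xi M)_{p\<bullet>}\<close>: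
  a point for p = 0, and for p \<ge> 1 the compatible families \<open>(x_0,\<dots>,x_p)\<close> of
  elements of \<open>(N_xi M)_{p-1,q}\<close> with \<open>d_i x_j = d_{j-1} x_i\<close> for i < j.\<close>
definition Match :: "('o, 'm) relcat \<Rightarrow> nat \<Rightarrow> nat \<Rightarrow>
    (nat \<Rightarrow> (nat \<times> nat) set list \<Rightarrow> (nat \<times> nat) set list \<Rightarrow> 'm) set" where
  "Match M p q = (if p = 0 then {\<lambda>i. undefined} else
     {x. (\<forall>i\<le>p. x i \<in> NX M (p - 1) q) \<and> (\<forall>i>p. x i = undefined) \<and>
         (\<forall>i j. i < j \<longrightarrow> j \<le> p \<longrightarrow> hface (p - 1) q i (x j) = hface (p - 1) q (j - 1) (x i))})"

definition match_face :: "nat \<Rightarrow> nat \<Rightarrow> nat \<Rightarrow>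
    (nat \<Rightarrow> (nat \<times> nat) set list \<Rightarrow> (nat \<times> nat) set list \<Rightarrow> 'm) \<Rightarrow>
    (nat \<Rightarrow> (nat \<times> nat) set list \<Rightarrow> (nat \<times> nat) set list \<Rightarrow> 'm)" where
  "match_face p q j x = (if p = 0 then (\<lambda>i. undefined) else
     (\<lambda>i. if i \<le> p then vface (p - 1) q j (x i) else undefined))"

definition match_map :: "nat \<Rightarrow> nat \<Rightarrow> ((nat \<times> nat) set list \<Rightarrow> (nat \<times> nat) set list \<Rightarrow> 'm) \<Rightarrow>
    (nat \<Rightarrow> (nat \<times> nat) set list \<Rightarrow> (nat \<times> nat) set list \<Rightarrow> 'm)" where
  "match_map p q F = (if p = 0 then (\<lambda>i. undefined) else
     (\<lambda>i. if i \<le> p then hface p q i F else undefined))"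

definition reedy_fibrant_NX :: "('o, 'm) relcat \<Rightarrow> bool" where
  "reedy_fibrant_NX M \<longleftrightarrow>
     (\<forall>p. kan_fibration (NX M p) (vface p) (Match M p) (match_face p) (match_map p))"

definition in_subcomplex :: "nat \<Rightarrow> nat \<Rightarrow> nat \<Rightarrow> (nat \<times> nat) set \<Rightarrow> bool" where
  "in_subcomplex k n m S \<longleftrightarrow>
     (fst ` S \<noteq> {0..n} \<and> fst ` S \<noteq> {0..n} - {k}) \<or> snd ` S \<noteq> {0..m}"

definition Skmn :: "nat \<Rightarrow> nat \<Rightarrow> nat \<Rightarrow> (nat \<times> nat) set list relposet" where
  "Skmn k n m = \<lparr> pcar = {As \<in> pcar (xi (hat_check n m)). in_subcomplex k n m (last As)},
                  ple = ple (xi (hat_check n m)),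
                  pwe = pwe (xi (hat_check n m)) \<rparr>"

end

theory Submission
  imports Defs
begin

lemma remdups_adj_idem[simp]: "remdups_adj (remdups_adj xs) = remdups_adj xs"
  using distinct_adj_altdef distinct_adj_remdups_adj by blast

lemma remdups_adj_Cons_remdups_adj:
  "remdups_adj (a # remdups_adj zs) = remdups_adj (a # zs)"
proof (cases zs)
  case Nil then show ?thesis by simp
next
  case (Cons b zs')
  have e: "remdups_adj zs = b # tl (remdups_adj (b # zs'))"
    using Cons remdups_adj_Cons_alt by metis
  show ?thesis
  proof (cases "a = b")
    case True
    then show ?thesis using Cons e
      by (metis remdups_adj.simps(3) remdups_adj_idem)
  next
    case False
    then show ?thesis using Cons e
      by (metis remdups_adj.simps(3) remdups_adj_idem)
  qed
qed

lemma remdups_adj_map_remdups_adj: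
  "remdups_adj (map F (remdups_adj xs)) = remdups_adj (map F xs)"
proof (induction xs rule: remdups_adj.induct)
  case 1 then show ?case by simp
next
  case (2 x) then show ?case by simp
next
  case (3 x y xs)
  show ?case
  proof (cases "x = y")
    case True
    then show ?thesis using 3(1) by simp
  next
    case False
    have "remdups_adj (map F (remdups_adj (x # y # xs)))
        = remdups_adj (F x # map F (remdups_adj (y # xs)))" using False by simp
    also have "\<dots> = remdups_adj (F x # remdups_adj (map F (remdups_adj (y # xs))))"
      by (simp add: remdups_adj_Cons_remdups_adj)
    also have "\<dots> = remdups_adj (F x # remdups_adj (map F (y # xs)))"
      using 3(2) False by simp
    also have "\<dots> = remdups_adj (map F (x # y # xs))"
      by (simp only: remdups_adj_Cons_remdups_adj list.map)
    finally show ?thesis .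
  qed
qed

lemma ximg_comp: "ximg f (ximg g As) = ximg (f \<circ> g) As"
  unfolding ximg_def by (simp add: remdups_adj_map_remdups_adj o_def image_image)

lemma ximg_cong: "(\<And>A x. A \<in> set As \<Longrightarrow> x \<in> A \<Longrightarrow> f x = g x) \<Longrightarrow> ximg f As = ximg g As"
  unfolding ximg_def by (metis (no_types, lifting) image_cong map_eq_conv)

lemma set_ximg[simp]: "set (ximg f As) = (\<lambda>A. f ` A) ` set As"
  by (simp add: ximg_def)
lemma hd_ximg[simp]: "As \<noteq> [] \<Longrightarrow> hd (ximg f As) = f ` hd As"
  by (simp add: ximg_def hd_map)
lemma last_ximg[simp]: "As \<noteq> [] \<Longrightarrow> last (ximg f As) = f ` last As"
  by (simp add: ximg_def last_map)
lemma ximg_Nil_iff[simp]: "ximg f As = [] \<longleftrightarrow> As = []"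
  by (simp add: ximg_def)

lemma sorted_wrt_psubset_distinct: "sorted_wrt (\<subset>) As \<Longrightarrow> distinct As"
  by (induction As) auto

lemma ximg_map:
  assumes "sorted_wrt (\<subset>) As" "inj_on f (\<Union>(set As))"
  shows "ximg f As = map (\<lambda>A. f ` A) As" "sorted_wrt (\<subset>) (ximg f As)"
proof -
  have s: "sorted_wrt (\<subset>) (map (\<lambda>A. f ` A) As)"
    unfolding sorted_wrt_map
    using assms
  proof (induction As)
    case Nil then show ?case by simp
  next
    case (Cons A As)
    have "\<forall>B\<in>set As. f ` A \<subset> f ` B"
    proof
      fix B assume B: "B \<in> set As"
      with Cons.prems have "A \<subset> B" by auto
      moreover have "inj_on f B" by (rule inj_on_subset[OF Cons.prems(2)]) (use B in auto)
      ultimately have "f ` A \<noteq> f ` B" using inj_on_image_eq_iff[of f B A B] by blast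
      moreover have "f ` A \<subseteq> f ` B" using \<open>A \<subset> B\<close> by blast
      ultimately show "f ` A \<subset> f ` B" by blast
    qed
    moreover have "sorted_wrt (\<lambda>x y. f ` x \<subset> f ` y) As"
    proof (rule Cons.IH)
      show "sorted_wrt (\<subset>) As" using Cons.prems(1) by simp
      show "inj_on f (\<Union> (set As))" by (rule inj_on_subset[OF Cons.prems(2)]) auto
    qed
    ultimately show ?case by simp
  qed
  then show "ximg f As = map (\<lambda>A. f ` A) As"
    unfolding ximg_def by (simp add: remdups_adj_distinct sorted_wrt_psubset_distinct)
  with s show "sorted_wrt (\<subset>) (ximg f As)" by simp
qed

lemma grid_le_refl[simp]: "grid_le x x" by (simp add: grid_le_def)
lemma grid_le_antisym: "grid_le x y \<Longrightarrow> grid_le y x \<Longrightarrow> x = y"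
  by (simp add: grid_le_def prod_eq_iff)
lemma grid_le_trans: "grid_le x y \<Longrightarrow> grid_le y z \<Longrightarrow> grid_le x z"
  by (auto simp: grid_le_def)

lemma chain_min_eq:
  assumes "x \<in> A" "\<forall>y\<in>A. grid_le x y"
  shows "chain_min grid_le A = x"
  unfolding chain_min_def
  using assms by (auto intro!: the_equality intro: grid_le_antisym)

lemma chain_min_prop:
  assumes "finite A" "A \<noteq> {}" "\<forall>x\<in>A. \<forall>y\<in>A. grid_le x y \<or> grid_le y x"
  shows "chain_min grid_le A \<in> A \<and> (\<forall>y\<in>A. grid_le (chain_min grid_le A) y)"
proof -
  obtain x where x: "x \<in> A" "\<forall>y\<in>A. fst x + snd x \<le> fst y + snd y"
  proof -
    let ?m = "Min ((\<lambda>z. fst z + snd z) ` A)"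
    have "?m \<in> (\<lambda>z. fst z + snd z) ` A" using assms by simp
    then obtain x where "x \<in> A" "?m = fst x + snd x" by auto
    moreover have "\<forall>y\<in>A. ?m \<le> fst y + snd y" using assms by simp
    ultimately show ?thesis using that by auto
  qed
  have "\<forall>y\<in>A. grid_le x y"
  proof
    fix y assume y: "y \<in> A"
    show "grid_le x y"
    proof (cases "grid_le x y")
      case False
      then have "grid_le y x" using assms(3) x(1) y by blast
      with x(2) y have "y = x" by (auto simp: grid_le_def prod_eq_iff)
      then show ?thesis by simp
    qed
  qed
  then show ?thesis using chain_min_eq x(1) by metis
qed

lemma chain_min_image:
  assumes "finite A" "A \<noteq> {}" "\<forall>x\<in>A. \<forall>y\<in>A. grid_le x y \<or> grid_le y x"
    "\<And>x y. x\<in>A \<Longrightarrow> y\<in>A \<Longrightarrow> grid_le (r x) (r y) \<longleftrightarrow> grid_le x y"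
  shows "chain_min grid_le (r ` A) = r (chain_min grid_le A)"
  using chain_min_prop[OF assms(1-3)] assms(4)
  by (intro chain_min_eq) auto

lemma emb_inj:
  assumes "\<And>x y. x\<in>U \<Longrightarrow> y\<in>U \<Longrightarrow> grid_le (r x) (r y) \<longleftrightarrow> grid_le x y"
  shows "inj_on r U"
  using assms by (metis grid_le_antisym grid_le_refl inj_onI)

lemma xi_chain_ximg:
  assumes "xi_chain P0 As" "ple P0 = grid_le" "ple P = grid_le"
    "\<And>A. A\<in>set As \<Longrightarrow> A \<subseteq> U"
    "\<And>x y. x\<in>U \<Longrightarrow> y\<in>U \<Longrightarrow> grid_le (r x) (r y) \<longleftrightarrow> grid_le x y"
    "r ` U \<subseteq> pcar P"
  shows "xi_chain P (ximg r As)"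
proof -
  have inj: "inj_on r (\<Union>(set As))"
  proof -
    have "\<Union>(set As) \<subseteq> U" using assms(4) by blast
    then show ?thesis using inj_on_subset[OF emb_inj[OF assms(5)]] by blast
  qed
  have s: "sorted_wrt (\<subset>) As" using assms(1) by (simp add: xi_chain_def)
  show ?thesis
    unfolding xi_chain_def
  proof (intro conjI)
    have "As \<noteq> []" using assms(1) unfolding xi_chain_def by blast
    then show "ximg r As \<noteq> []" by simp
    show "sorted_wrt (\<subset>) (ximg r As)" by (rule ximg_map(2)[OF s inj])
    show "\<forall>A\<in>set (ximg r As). A \<noteq> {} \<and> finite A \<and> A \<subseteq> pcar P \<and>
        (\<forall>x\<in>A. \<forall>y\<in>A. ple P x y \<or> ple P y x)"
    proof
      fix B assume "B \<in> set (ximg r As)"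
      then obtain A where A: "A \<in> set As" "B = r ` A" by auto
      have "A \<noteq> {} \<and> finite A \<and> A \<subseteq> pcar P0 \<and> (\<forall>x\<in>A. \<forall>y\<in>A. grid_le x y \<or> grid_le y x)"
        using assms(1,2) A(1) by (auto simp: xi_chain_def)
      moreover have "A \<subseteq> U" using assms(4) A(1) by auto
      ultimately have t: "A \<noteq> {}" "finite A" "A \<subseteq> U" "\<forall>x\<in>A. \<forall>y\<in>A. grid_le x y \<or> grid_le y x"
        by auto
      have "\<forall>x\<in>B. \<forall>y\<in>B. grid_le x y \<or> grid_le y x"
      proof (intro ballI)
        fix x y assume "x \<in> B" "y \<in> B"
        then obtain a b where "a \<in> A" "b \<in> A" "x = r a" "y = r b" using A(2) by auto
        then show "grid_le x y \<or> grid_le y x" using t assms(5) by (metis subsetD)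
      qed
      then show "B \<noteq> {} \<and> finite B \<and> B \<subseteq> pcar P \<and> (\<forall>x\<in>B. \<forall>y\<in>B. ple P x y \<or> ple P y x)"
      proof (intro conjI)
        show "B \<subseteq> pcar P" using A(2) t(3) assms(6) by blast
      qed (use A(2) t assms(3) in auto)
    qed
  qed
qed

lemma xi_simps[simp]:
  "pcar (xi P) = {As. xi_chain P As}"
  "ple (xi P) = (\<lambda>Bs As. set Bs \<subseteq> set As)"
  "pwe (xi P) = (\<lambda>Bs As. set Bs \<subseteq> set As \<and>
                     pwe P (chain_min (ple P) (hd Bs)) (chain_min (ple P) (hd As)))"
  by (simp_all add: xi_def)

lemma relfun_pullback_gen:
  assumes Z: "relfun T M Z" and "ple P = grid_le" "ple P0 = grid_le"
    and T: "pcar T \<subseteq> pcar (xi P)" "ple T = ple (xi P)" "pwe T = pwe (xi P)"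
    and land: "\<And>As. As \<in> pcar R \<Longrightarrow> ximg r As \<in> pcar T"
    and R: "pcar R \<subseteq> pcar (xi P0)" "ple R = ple (xi P0)" "pwe R = pwe (xi P0)"
    and U: "\<And>As A. As \<in> pcar R \<Longrightarrow> A \<in> set As \<Longrightarrow> A \<subseteq> U"
    and emb: "\<And>x y. x\<in>U \<Longrightarrow> y\<in>U \<Longrightarrow> grid_le (r x) (r y) \<longleftrightarrow> grid_le x y"
    and into: "r ` U \<subseteq> pcar P"
    and we: "\<And>x y. x\<in>U \<Longrightarrow> y\<in>U \<Longrightarrow> pwe P0 x y \<Longrightarrow> pwe P (r x) (r y)"
  shows "relfun R M (\<lambda>Bs As. if Bs \<in> pcar R \<and> As \<in> pcar R \<and> set Bs \<subseteq> set As
                          then Z (ximg r Bs) (ximg r As) else undefined)"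
proof -
  have ch: "ximg r As \<in> pcar T" if "As \<in> pcar R" for As
    using land that by blast
  have le: "ple T (ximg r Bs) (ximg r As)" if "set Bs \<subseteq> set As" for Bs As
    unfolding T(2) xi_simps using that by auto
  have cm: "chain_min grid_le (hd (ximg r As)) = r (chain_min grid_le (hd As))"
    if "As \<in> pcar R" for As
  proof -
    have c: "xi_chain P0 As" using that R(1) by auto
    then have ne: "As \<noteq> []" by (simp add: xi_chain_def)
    then have h: "hd As \<in> set As" by simp
    have "finite (hd As) \<and> hd As \<noteq> {} \<and> (\<forall>x\<in>hd As. \<forall>y\<in>hd As. grid_le x y \<or> grid_le y x)"
      using c h unfolding xi_chain_def assms(3) by blast
    moreover have "hd As \<subseteq> U" using U[OF that h] .
    ultimately have "chain_min grid_le (r ` hd As) = r (chain_min grid_le (hd As))"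
      by (intro chain_min_image) (use emb in blast)+
    then show ?thesis using ne by simp
  qed
  have minU: "chain_min grid_le (hd As) \<in> U" if "As \<in> pcar R" for As
  proof -
    have c: "xi_chain P0 As" using that R(1) by auto
    then have ne: "As \<noteq> []" by (simp add: xi_chain_def)
    then have h: "hd As \<in> set As" by simp
    have "finite (hd As) \<and> hd As \<noteq> {} \<and> (\<forall>x\<in>hd As. \<forall>y\<in>hd As. grid_le x y \<or> grid_le y x)"
      using c h unfolding xi_chain_def assms(3) by blast
    then show ?thesis using chain_min_prop U[OF that h] by blast
  qed
  have weq: "pwe T (ximg r Bs) (ximg r As)"
    if "Bs \<in> pcar R" "As \<in> pcar R" "pwe R Bs As" for Bs As
  proof -
    have w: "set Bs \<subseteq> set As" "pwe P0 (chain_min grid_le (hd Bs)) (chain_min grid_le (hd As))"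
      using that(3) unfolding R(3) xi_simps assms(3) by blast+
    have "pwe P (r (chain_min grid_le (hd Bs))) (r (chain_min grid_le (hd As)))"
      using we[OF minU[OF that(1)] minU[OF that(2)] w(2)] .
    then have "pwe (xi P) (ximg r Bs) (ximg r As)"
      unfolding xi_simps assms(2) cm[OF that(1)] cm[OF that(2)] using w(1) by auto
    then show ?thesis unfolding T(3) .
  qed
  have Zf: "\<forall>p\<in>pcar T. \<forall>q\<in>pcar T. ple T p q \<longrightarrow>
        Z p q \<in> Ar M \<and> Dom M (Z p q) = Dom M (Z p p) \<and> Cod M (Z p q) = Dom M (Z q q)"
    "\<forall>p\<in>pcar T. Z p p = Idm M (Dom M (Z p p))"
    "\<forall>p\<in>pcar T. \<forall>q\<in>pcar T. \<forall>r\<in>pcar T. ple T p q \<longrightarrow> ple T q r \<longrightarrow>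
        Comp M (Z q r) (Z p q) = Z p r"
    "\<forall>p\<in>pcar T. \<forall>q\<in>pcar T. pwe T p q \<longrightarrow> Z p q \<in> We M"
    using Z unfolding relfun_def by blast+
  define H where "H = (\<lambda>Bs As. if Bs \<in> pcar R \<and> As \<in> pcar R \<and> set Bs \<subseteq> set As
                          then Z (ximg r Bs) (ximg r As) else undefined)"
  have Heq: "H Bs As = Z (ximg r Bs) (ximg r As)" if "Bs \<in> pcar R" "As \<in> pcar R" "set Bs \<subseteq> set As" for Bs As
    unfolding H_def using that by simp
  have Rle: "ple R a b \<longleftrightarrow> set a \<subseteq> set b" for a b unfolding R(2) by simp
  have c1: "\<forall>p\<in>pcar R. \<forall>q\<in>pcar R. ple R p q \<longrightarrow>
        H p q \<in> Ar M \<and> Dom M (H p q) = Dom M (H p p) \<and> Cod M (H p q) = Dom M (H q q)"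
  proof (intro ballI impI)
    fix p q assume pq: "p \<in> pcar R" "q \<in> pcar R" "ple R p q"
    have s: "set p \<subseteq> set q" using pq(3) Rle by blast
    have "Z (ximg r p) (ximg r q) \<in> Ar M \<and> Dom M (Z (ximg r p) (ximg r q)) = Dom M (Z (ximg r p) (ximg r p)) \<and>
       Cod M (Z (ximg r p) (ximg r q)) = Dom M (Z (ximg r q) (ximg r q))"
      using Zf(1) ch[OF pq(1)] ch[OF pq(2)] le[OF s] by blast
    then show "H p q \<in> Ar M \<and> Dom M (H p q) = Dom M (H p p) \<and> Cod M (H p q) = Dom M (H q q)"
      using Heq[OF pq(1,2) s] Heq[OF pq(1,1)] Heq[OF pq(2,2)] by simp
  qed
  have c2: "\<forall>p\<in>pcar R. H p p = Idm M (Dom M (H p p))"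
  proof
    fix p assume p: "p \<in> pcar R"
    show "H p p = Idm M (Dom M (H p p))"
      using Heq[OF p p] Zf(2) ch[OF p] by simp
  qed
  have c3: "\<forall>p\<in>pcar R. \<forall>q\<in>pcar R. \<forall>s\<in>pcar R. ple R p q \<longrightarrow> ple R q s \<longrightarrow>
        Comp M (H q s) (H p q) = H p s"
  proof (intro ballI impI)
    fix p q s assume pqs: "p \<in> pcar R" "q \<in> pcar R" "s \<in> pcar R" "ple R p q" "ple R q s"
    have s1: "set p \<subseteq> set q" "set q \<subseteq> set s" using pqs(4,5) Rle by blast+
    then have s2: "set p \<subseteq> set s" by blast
    have "Comp M (Z (ximg r q) (ximg r s)) (Z (ximg r p) (ximg r q)) = Z (ximg r p) (ximg r s)"
      using Zf(3) ch[OF pqs(1)] ch[OF pqs(2)] ch[OF pqs(3)] le[OF s1(1)] le[OF s1(2)] by blast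
    then show "Comp M (H q s) (H p q) = H p s"
      using Heq[OF pqs(1,2) s1(1)] Heq[OF pqs(2,3) s1(2)] Heq[OF pqs(1,3) s2] by simp
  qed
  have c4: "\<forall>p\<in>pcar R. \<forall>q\<in>pcar R. pwe R p q \<longrightarrow> H p q \<in> We M"
  proof (intro ballI impI)
    fix p q assume pq: "p \<in> pcar R" "q \<in> pcar R" "pwe R p q"
    have s: "set p \<subseteq> set q" using pq(3) unfolding R(3) by simp
    have "Z (ximg r p) (ximg r q) \<in> We M"
      using Zf(4) ch[OF pq(1)] ch[OF pq(2)] weq[OF pq] by blast
    then show "H p q \<in> We M" using Heq[OF pq(1,2) s] by simp
  qed
  have c5: "\<forall>p q. \<not> (p \<in> pcar R \<and> q \<in> pcar R \<and> ple R p q) \<longrightarrow> H p q = undefined"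
    unfolding H_def using Rle by auto
  have "relfun R M H" unfolding relfun_def using c1 c2 c3 c4 c5 by blast
  then show ?thesis by (simp only: H_def)
qed

lemma relfun_pullback:
  assumes Z: "relfun (xi P) M Z" and "ple P = grid_le" "ple P0 = grid_le"
    and R: "pcar R \<subseteq> pcar (xi P0)" "ple R = ple (xi P0)" "pwe R = pwe (xi P0)"
    and U: "\<And>As A. As \<in> pcar R \<Longrightarrow> A \<in> set As \<Longrightarrow> A \<subseteq> U"
    and emb: "\<And>x y. x\<in>U \<Longrightarrow> y\<in>U \<Longrightarrow> grid_le (r x) (r y) \<longleftrightarrow> grid_le x y"
    and into: "r ` U \<subseteq> pcar P"
    and we: "\<And>x y. x\<in>U \<Longrightarrow> y\<in>U \<Longrightarrow> pwe P0 x y \<Longrightarrow> pwe P (r x) (r y)"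
  shows "relfun R M (\<lambda>Bs As. if Bs \<in> pcar R \<and> As \<in> pcar R \<and> set Bs \<subseteq> set As
                          then Z (ximg r Bs) (ximg r As) else undefined)"
proof -
  have land: "ximg r As \<in> pcar (xi P)" if "As \<in> pcar R" for As
  proof -
    have c: "xi_chain P0 As" using that R(1) by auto
    have "xi_chain P (ximg r As)" by (rule xi_chain_ximg[OF c assms(3,2) U[OF that] emb into])
    then show ?thesis by simp
  qed
  show ?thesis
    by (rule relfun_pullback_gen[OF Z assms(2,3) order_refl refl refl land R U emb into we])
qed

lemma relfunD:
  assumes "relfun P M F"
  shows "\<And>p q. p \<in> pcar P \<Longrightarrow> q \<in> pcar P \<Longrightarrow> ple P p q \<Longrightarrow>
           F p q \<in> Ar M \<and> Dom M (F p q) = Dom M (F p p) \<and> Cod M (F p q) = Dom M (F q q)"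
    "\<And>p. p \<in> pcar P \<Longrightarrow> F p p = Idm M (Dom M (F p p))"
    "\<And>p q r. p \<in> pcar P \<Longrightarrow> q \<in> pcar P \<Longrightarrow> r \<in> pcar P \<Longrightarrow> ple P p q \<Longrightarrow> ple P q r \<Longrightarrow>
        Comp M (F q r) (F p q) = F p r"
    "\<And>p q. p \<in> pcar P \<Longrightarrow> q \<in> pcar P \<Longrightarrow> pwe P p q \<Longrightarrow> F p q \<in> We M"
    "\<And>p q. \<not> (p \<in> pcar P \<and> q \<in> pcar P \<and> ple P p q) \<Longrightarrow> F p q = undefined"
  using assms unfolding relfun_def by blast+

lemma glue_val:
  assumes cons: "\<And>f g a b. f\<in>\<Phi> \<Longrightarrow> g\<in>\<Phi> \<Longrightarrow> a\<in>pcar S \<Longrightarrow> b \<in> pcar S \<Longrightarrow> ple S a b \<Longrightarrow>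
       inF f b \<Longrightarrow> inF g b \<Longrightarrow> W f a b = W g a b"
    and "f \<in> \<Phi>" "a \<in> pcar S" "b \<in> pcar S" "ple S a b" "inF f b"
  shows "(SOME v. \<exists>f\<in>\<Phi>. inF f b \<and> v = W f a b) = W f a b"
proof -
  have ex: "\<exists>f\<in>\<Phi>. inF f b \<and> W f a b = W f a b" using assms(2-6) by blast
  have "\<exists>g\<in>\<Phi>. inF g b \<and> (SOME v. \<exists>f\<in>\<Phi>. inF f b \<and> v = W f a b) = W g a b"
    using someI_ex[of "\<lambda>v. \<exists>f\<in>\<Phi>. inF f b \<and> v = W f a b"] ex by blast
  then obtain g where g: "g \<in> \<Phi>" "inF g b" "(SOME v. \<exists>f\<in>\<Phi>. inF f b \<and> v = W f a b) = W g a b"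
    by blast
  show ?thesis using g(3) cons[OF g(1) assms(2-5) g(2) assms(6)] by simp
qed

lemma relfun_glue:
  fixes S :: "'p relposet" and W :: "'f \<Rightarrow> 'p \<Rightarrow> 'p \<Rightarrow> 'm"
  assumes relf: "\<And>f. f \<in> \<Phi> \<Longrightarrow> relfun (S\<lparr>pcar := {a \<in> pcar S. inF f a}\<rparr>) M
        (\<lambda>a b. if (a \<in> pcar S \<and> inF f a) \<and> (b \<in> pcar S \<and> inF f b) \<and> ple S a b then W f a b else undefined)"
    and cover: "\<And>a. a \<in> pcar S \<Longrightarrow> \<exists>f\<in>\<Phi>. inF f a"
    and down: "\<And>f a b. f \<in> \<Phi> \<Longrightarrow> a \<in> pcar S \<Longrightarrow> b \<in> pcar S \<Longrightarrow> ple S a b \<Longrightarrow> inF f b \<Longrightarrow> inF f a"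
    and cons: "\<And>f g a b. f\<in>\<Phi> \<Longrightarrow> g\<in>\<Phi> \<Longrightarrow> a\<in>pcar S \<Longrightarrow> b \<in> pcar S \<Longrightarrow> ple S a b \<Longrightarrow>
       inF f b \<Longrightarrow> inF g b \<Longrightarrow> W f a b = W g a b"
    and refl: "\<And>a. a\<in>pcar S \<Longrightarrow> ple S a a"
    and trans: "\<And>a b c. a\<in>pcar S \<Longrightarrow> b\<in>pcar S \<Longrightarrow> c\<in>pcar S \<Longrightarrow> ple S a b \<Longrightarrow> ple S b c \<Longrightarrow> ple S a c"
    and wele: "\<And>a b. a\<in>pcar S \<Longrightarrow> b\<in>pcar S \<Longrightarrow> pwe S a b \<Longrightarrow> ple S a b"
  shows "relfun S M (\<lambda>a b. if a \<in> pcar S \<and> b \<in> pcar S \<and> ple S a b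
                          then (SOME v. \<exists>f\<in>\<Phi>. inF f b \<and> v = W f a b) else undefined)"
proof -
  define V where "V = (\<lambda>a b. SOME v. \<exists>f\<in>\<Phi>. inF f b \<and> v = W f a b)"
  have Vv: "V a b = W f a b" if "f \<in> \<Phi>" "a \<in> pcar S" "b \<in> pcar S" "ple S a b" "inF f b" for f a b
    unfolding V_def by (rule glue_val[where W=W and inF=inF, OF cons that])
  have R1: "W f p q \<in> Ar M \<and> Dom M (W f p q) = Dom M (W f p p) \<and> Cod M (W f p q) = Dom M (W f q q)"
    if "f \<in> \<Phi>" "p \<in> pcar S" "q \<in> pcar S" "inF f p" "inF f q" "ple S p q" for f p q
    using relfunD(1)[OF relf[OF that(1)], of p q] that refl by simp
  have R2: "W f p p = Idm M (Dom M (W f p p))" if "f \<in> \<Phi>" "p \<in> pcar S" "inF f p" for f p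
    using relfunD(2)[OF relf[OF that(1)], of p] that refl by simp
  have R3: "Comp M (W f q r) (W f p q) = W f p r"
    if "f \<in> \<Phi>" "p \<in> pcar S" "q \<in> pcar S" "r \<in> pcar S" "inF f p" "inF f q" "inF f r"
       "ple S p q" "ple S q r" for f p q r
  proof -
    have pr: "ple S p r" using trans that by blast
    show ?thesis using relfunD(3)[OF relf[OF that(1)], of p q r] that pr by simp
  qed
  have R4: "W f p q \<in> We M"
    if "f \<in> \<Phi>" "p \<in> pcar S" "q \<in> pcar S" "inF f p" "inF f q" "pwe S p q" for f p q
  proof -
    have pq: "ple S p q" using wele that by blast
    show ?thesis using relfunD(4)[OF relf[OF that(1)], of p q] that pq by simp
  qed
  define H where "H = (\<lambda>a b. if a \<in> pcar S \<and> b \<in> pcar S \<and> ple S a b then V a b else undefined)"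
  have Heq: "H a b = V a b" if "a \<in> pcar S" "b \<in> pcar S" "ple S a b" for a b
    unfolding H_def using that by simp
  have c1: "\<forall>p\<in>pcar S. \<forall>q\<in>pcar S. ple S p q \<longrightarrow>
        H p q \<in> Ar M \<and> Dom M (H p q) = Dom M (H p p) \<and> Cod M (H p q) = Dom M (H q q)"
  proof (intro ballI impI)
    fix p q assume pq: "p \<in> pcar S" "q \<in> pcar S" "ple S p q"
    obtain f where f: "f \<in> \<Phi>" "inF f q" using cover pq by blast
    have fp: "inF f p" using down f pq by blast
    show "H p q \<in> Ar M \<and> Dom M (H p q) = Dom M (H p p) \<and> Cod M (H p q) = Dom M (H q q)"
      using Heq[OF pq] Heq[OF pq(1) pq(1) refl[OF pq(1)]] Heq[OF pq(2) pq(2) refl[OF pq(2)]]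
        Vv[OF f(1) pq f(2)] Vv[OF f(1) pq(1) pq(1) refl[OF pq(1)] fp]
        Vv[OF f(1) pq(2) pq(2) refl[OF pq(2)] f(2)] R1[OF f(1) pq(1,2) fp f(2) pq(3)]
      by simp
  qed
  have c2: "\<forall>p\<in>pcar S. H p p = Idm M (Dom M (H p p))"
  proof
    fix p assume p: "p \<in> pcar S"
    obtain f where f: "f \<in> \<Phi>" "inF f p" using cover p by blast
    show "H p p = Idm M (Dom M (H p p))"
      using Heq[OF p p refl[OF p]] Vv[OF f(1) p p refl[OF p] f(2)] R2[OF f(1) p f(2)] by simp
  qed
  have c3: "\<forall>p\<in>pcar S. \<forall>q\<in>pcar S. \<forall>r\<in>pcar S. ple S p q \<longrightarrow> ple S q r \<longrightarrow>
        Comp M (H q r) (H p q) = H p r"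
  proof (intro ballI impI)
    fix p q r assume pqr: "p \<in> pcar S" "q \<in> pcar S" "r \<in> pcar S" "ple S p q" "ple S q r"
    obtain f where f: "f \<in> \<Phi>" "inF f r" using cover pqr by blast
    have fq: "inF f q" using down f pqr by blast
    have fp: "inF f p" using down f pqr fq by blast
    have pr: "ple S p r" using trans pqr by blast
    show "Comp M (H q r) (H p q) = H p r"
      using Heq[OF pqr(2,3,5)] Heq[OF pqr(1,2,4)] Heq[OF pqr(1,3) pr]
        Vv[OF f(1) pqr(2,3,5) f(2)] Vv[OF f(1) pqr(1,2,4) fq] Vv[OF f(1) pqr(1,3) pr f(2)]
        R3[OF f(1) pqr(1,2,3) fp fq f(2) pqr(4,5)] by simp
  qed
  have c4: "\<forall>p\<in>pcar S. \<forall>q\<in>pcar S. pwe S p q \<longrightarrow> H p q \<in> We M"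
  proof (intro ballI impI)
    fix p q assume pq: "p \<in> pcar S" "q \<in> pcar S" "pwe S p q"
    have le: "ple S p q" using wele pq by blast
    obtain f where f: "f \<in> \<Phi>" "inF f q" using cover pq by blast
    have fp: "inF f p" using down f pq le by blast
    show "H p q \<in> We M"
      using Heq[OF pq(1,2) le] Vv[OF f(1) pq(1,2) le f(2)] R4[OF f(1) pq(1,2) fp f(2) pq(3)] by simp
  qed
  have c5: "\<forall>p q. \<not> (p \<in> pcar S \<and> q \<in> pcar S \<and> ple S p q) \<longrightarrow> H p q = undefined"
    unfolding H_def by auto
  have "relfun S M H" unfolding relfun_def using c1 c2 c3 c4 c5 by blast
  then show ?thesis by (simp only: H_def V_def)
qed

definition codeg :: "nat \<Rightarrow> nat \<Rightarrow> nat" where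
  "codeg j x = (if x < j then x else x - 1)"

lemma cf_le_iff[simp]: "coface j x \<le> coface j y \<longleftrightarrow> x \<le> y"
  by (auto simp: coface_def)
lemma cf_ne[simp]: "coface j x \<noteq> j" by (auto simp: coface_def)
lemma cd_cf[simp]: "codeg j (coface j x) = x" by (auto simp: coface_def codeg_def)
lemma cf_cd: "x \<noteq> j \<Longrightarrow> coface j (codeg j x) = x" by (auto simp: coface_def codeg_def)
lemma cd_le_iff: "x \<noteq> j \<Longrightarrow> y \<noteq> j \<Longrightarrow> codeg j x \<le> codeg j y \<longleftrightarrow> x \<le> y"
  by (auto simp: codeg_def)
lemma cf_bound: "x \<le> N - 1 \<Longrightarrow> 1 \<le> N \<Longrightarrow> coface j x \<le> N" by (auto simp: coface_def)
lemma cd_bound: "x \<le> N \<Longrightarrow> x \<noteq> j \<Longrightarrow> j \<le> N \<Longrightarrow> codeg j x \<le> N - 1" by (auto simp: codeg_def)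
lemma cf_cf: "i < j \<Longrightarrow> coface j (coface i a) = coface i (coface (j - 1) a)"
  by (auto simp: coface_def)
lemma cd2_ne: "a \<noteq> j \<Longrightarrow> a \<noteq> j' \<Longrightarrow> j < j' \<Longrightarrow> codeg j' a \<noteq> j"
  by (auto simp: codeg_def)
lemma cd2_a: "a \<noteq> j \<Longrightarrow> a \<noteq> j' \<Longrightarrow> j < j' \<Longrightarrow> coface j (codeg j (codeg j' a)) = codeg j' a"
  by (auto simp: codeg_def coface_def)
lemma cd2_b: "a \<noteq> j \<Longrightarrow> a \<noteq> j' \<Longrightarrow> j < j' \<Longrightarrow> coface (j' - 1) (codeg j (codeg j' a)) = codeg j a"
  by (auto simp: codeg_def coface_def)
lemma cd2_bound: "a \<le> N \<Longrightarrow> a \<noteq> j \<Longrightarrow> a \<noteq> j' \<Longrightarrow> j < j' \<Longrightarrow> j' \<le> N \<Longrightarrow> codeg j (codeg j' a) \<le> N - 2"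
  by (auto simp: codeg_def)
lemma cd2_le_iff: "a \<noteq> j \<Longrightarrow> a \<noteq> j' \<Longrightarrow> b \<noteq> j \<Longrightarrow> b \<noteq> j' \<Longrightarrow> j < j' \<Longrightarrow>
   codeg j (codeg j' a) \<le> codeg j (codeg j' b) \<longleftrightarrow> a \<le> b"
  by (auto simp: codeg_def)

lemma check_hat_simps[simp]:
  "pcar (check_hat p q) = {0..p} \<times> {0..q}" "ple (check_hat p q) = grid_le"
  "pwe (check_hat p q) = (\<lambda>x y. grid_le x y \<and> fst x = fst y)"
  by (simp_all add: check_hat_def)
lemma hat_check_simps[simp]:
  "pcar (hat_check n m) = {0..n} \<times> {0..m}" "ple (hat_check n m) = grid_le"
  "pwe (hat_check n m) = (\<lambda>x y. grid_le x y \<and> snd x = snd y)"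
  by (simp_all add: hat_check_def)

definition pbk :: "(nat \<times> nat) relposet \<Rightarrow> (nat \<times> nat \<Rightarrow> nat \<times> nat) \<Rightarrow>
   ((nat \<times> nat) set list \<Rightarrow> (nat \<times> nat) set list \<Rightarrow> 'm) \<Rightarrow>
   ((nat \<times> nat) set list \<Rightarrow> (nat \<times> nat) set list \<Rightarrow> 'm)" where
  "pbk P1 g Z = (\<lambda>Bs As. if Bs \<in> pcar (xi P1) \<and> As \<in> pcar (xi P1) \<and> set Bs \<subseteq> set As
      then Z (ximg g Bs) (ximg g As) else undefined)"

lemma NXmap_pbk: "NXmap p' q' \<alpha> \<beta> F = pbk (check_hat p' q') (map_prod \<alpha> \<beta>) F"
  by (simp add: NXmap_def pbk_def)

lemma pbk_app: "Ds \<in> pcar (xi P1) \<Longrightarrow> Cs \<in> pcar (xi P1) \<Longrightarrow> set Ds \<subseteq> set Cs \<Longrightarrow>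
   pbk P1 g Z Ds Cs = Z (ximg g Ds) (ximg g Cs)"
  by (simp add: pbk_def)

lemma pbk_comp:
  assumes "\<And>As. As \<in> pcar (xi P1) \<Longrightarrow> ximg g As \<in> pcar (xi P0)"
  shows "pbk P1 g (pbk P0 e Z) = pbk P1 (e \<circ> g) Z"
  using assms by (auto simp: pbk_def ximg_comp fun_eq_iff image_mono)

lemma xi_chain_pts: "xi_chain P As \<Longrightarrow> A \<in> set As \<Longrightarrow> x \<in> A \<Longrightarrow> x \<in> pcar P"
  by (auto simp: xi_chain_def)

lemma pbk_cong:
  assumes "\<And>x. x \<in> pcar P1 \<Longrightarrow> e x = e' x"
  shows "pbk P1 e Z = pbk P1 e' Z"
proof -
  have "ximg e As = ximg e' As" if "xi_chain P1 As" for As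
    by (rule ximg_cong) (use assms xi_chain_pts[OF that] in blast)
  then show ?thesis by (auto simp: pbk_def fun_eq_iff)
qed

lemma ximg_id_chain: "xi_chain P As \<Longrightarrow> ximg id As = As"
  by (simp add: ximg_def xi_chain_def remdups_adj_distinct sorted_wrt_psubset_distinct)

lemma pbk_id:
  assumes "relfun (xi P1) M Z"
  shows "pbk P1 id Z = Z"
proof -
  have "Z Bs As = undefined" if "\<not> (Bs \<in> pcar (xi P1) \<and> As \<in> pcar (xi P1) \<and> set Bs \<subseteq> set As)" for Bs As
    using assms that unfolding relfun_def by auto
  then show ?thesis by (auto simp: pbk_def fun_eq_iff ximg_id_chain)
qed

lemma pbk_Zcong:
  assumes "\<And>Ds Cs. Ds \<in> pcar (xi P1) \<Longrightarrow> Cs \<in> pcar (xi P1) \<Longrightarrow> set Ds \<subseteq> set Cs \<Longrightarrow>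
            Z (ximg g Ds) (ximg g Cs) = Z' (ximg g Ds) (ximg g Cs)"
  shows "pbk P1 g Z = pbk P1 g Z'"
  using assms by (auto simp: pbk_def fun_eq_iff)

lemma sorted_last: "sorted_wrt (\<subset>) As \<Longrightarrow> A \<in> set As \<Longrightarrow> A \<subseteq> last As"
proof (induction As)
  case Nil then show ?case by simp
next
  case (Cons a As)
  show ?case
  proof (cases "As = []")
    case True then show ?thesis using Cons.prems by simp
  next
    case False
    then have l: "last (a # As) = last As" by simp
    show ?thesis
    proof (cases "A \<in> set As")
      case True then show ?thesis using Cons l by simp
    next
      case False
      then have "A = a" using Cons.prems by simp
      moreover have "last As \<in> set As" using \<open>As \<noteq> []\<close> by simp
      ultimately show ?thesis using Cons.prems(1) l by auto
    qed
  qed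
qed

lemma xi_chain_last: "xi_chain P As \<Longrightarrow> A \<in> set As \<Longrightarrow> A \<subseteq> last As"
  using sorted_last unfolding xi_chain_def by blast

lemma face_cons:
  assumes hyp: "pbk P1 af Zf = pbk P1 ag Zg" and P1: "ple P1 = grid_le"
    and c: "xi_chain P0 As" "xi_chain P0 Bs" "set Bs \<subseteq> set As" "last As \<subseteq> U'"
    and P0: "ple P0 = grid_le"
    and emb: "\<And>x y. x\<in>U' \<inter> pcar P0 \<Longrightarrow> y\<in>U' \<inter> pcar P0 \<Longrightarrow> grid_le (t x) (t y) \<longleftrightarrow> grid_le x y"
    and into: "t ` (U' \<inter> pcar P0) \<subseteq> pcar P1"
    and rf: "\<And>x. x \<in> U' \<inter> pcar P0 \<Longrightarrow> rf x = af (t x)"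
    and rg: "\<And>x. x \<in> U' \<inter> pcar P0 \<Longrightarrow> rg x = ag (t x)"
  shows "Zf (ximg rf Bs) (ximg rf As) = Zg (ximg rg Bs) (ximg rg As)"
proof -
  have UA: "A \<subseteq> U' \<inter> pcar P0" if "A \<in> set As" for A
    using xi_chain_last[OF c(1) that] c(4) xi_chain_pts[OF c(1) that] by blast
  have UB: "A \<subseteq> U' \<inter> pcar P0" if "A \<in> set Bs" for A
    using UA c(3) that by blast
  have DA: "ximg t As \<in> pcar (xi P1)"
    using xi_chain_ximg[OF c(1) P0 P1 UA emb into] by simp
  have DB: "ximg t Bs \<in> pcar (xi P1)"
    using xi_chain_ximg[OF c(2) P0 P1 UB emb into] by simp
  have sub: "set (ximg t Bs) \<subseteq> set (ximg t As)" using c(3) by auto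
  have pt: "x \<in> U' \<inter> pcar P0" if "A \<in> set As \<or> A \<in> set Bs" "x \<in> A" for A x
    using that UA UB by blast
  have rfx: "rf x = (af \<circ> t) x" "rg x = (ag \<circ> t) x" if "A \<in> set As \<or> A \<in> set Bs" "x \<in> A" for A x
    using rf rg pt[OF that] by auto
  have eA: "ximg rf As = ximg af (ximg t As)" "ximg rg As = ximg ag (ximg t As)"
    unfolding ximg_comp
    by (rule ximg_cong; metis rfx)+
  have eB: "ximg rf Bs = ximg af (ximg t Bs)" "ximg rg Bs = ximg ag (ximg t Bs)"
    unfolding ximg_comp
    by (rule ximg_cong; metis rfx)+
  show ?thesis
    using pbk_app[OF DB DA sub, of af Zf] pbk_app[OF DB DA sub, of ag Zg] hyp eA eB by simp
qed

definition eH :: "nat \<Rightarrow> nat \<times> nat \<Rightarrow> nat \<times> nat" where "eH j x = (coface j (snd x), fst x)"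
definition rH :: "nat \<Rightarrow> nat \<times> nat \<Rightarrow> nat \<times> nat" where "rH j x = (snd x, codeg j (fst x))"
definition eV :: "nat \<Rightarrow> nat \<times> nat \<Rightarrow> nat \<times> nat" where "eV i x = (snd x, coface i (fst x))"
definition rV :: "nat \<Rightarrow> nat \<times> nat \<Rightarrow> nat \<times> nat" where "rV i x = (codeg i (snd x), fst x)"
definition sw :: "nat \<times> nat \<Rightarrow> nat \<times> nat" where "sw x = (snd x, fst x)"

lemma relfun_pbk_gen:
  assumes Z: "relfun T M Z" and T: "pcar T \<subseteq> pcar (xi P)" "ple T = ple (xi P)" "pwe T = pwe (xi P)"
    and "ple P = grid_le" "ple P0 = grid_le"
    and emb: "\<And>x y. x\<in>pcar P0 \<Longrightarrow> y\<in>pcar P0 \<Longrightarrow> grid_le (r x) (r y) \<longleftrightarrow> grid_le x y"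
    and into: "r ` pcar P0 \<subseteq> pcar P"
    and we: "\<And>x y. x\<in>pcar P0 \<Longrightarrow> y\<in>pcar P0 \<Longrightarrow> pwe P0 x y \<Longrightarrow> pwe P (r x) (r y)"
    and land: "\<And>As. xi_chain P0 As \<Longrightarrow> ximg r As \<in> pcar T"
  shows "relfun (xi P0) M (pbk P0 r Z)"
  unfolding pbk_def
  by (rule relfun_pullback_gen[OF Z assms(5,6) T, where U="pcar P0"])
     (use land emb into we in \<open>auto simp: xi_chain_def\<close>)

lemma relfun_pbk:
  assumes Z: "relfun (xi P) M Z"
    and "ple P = grid_le" "ple P0 = grid_le"
    and emb: "\<And>x y. x\<in>pcar P0 \<Longrightarrow> y\<in>pcar P0 \<Longrightarrow> grid_le (r x) (r y) \<longleftrightarrow> grid_le x y"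
    and into: "r ` pcar P0 \<subseteq> pcar P"
    and we: "\<And>x y. x\<in>pcar P0 \<Longrightarrow> y\<in>pcar P0 \<Longrightarrow> pwe P0 x y \<Longrightarrow> pwe P (r x) (r y)"
  shows "relfun (xi P0) M (pbk P0 r Z)"
proof (rule relfun_pbk_gen[OF Z _ _ _ assms(2,3) emb into we])
  fix As assume "xi_chain P0 As"
  then show "ximg r As \<in> pcar (xi P)"
    using xi_chain_ximg[of P0 As P "pcar P0" r] emb into assms(2,3) by (auto simp: xi_chain_def)
qed auto

lemma land_box:
  assumes "xi_chain P0 As" "ple P0 = grid_le" "ple P = grid_le"
    "\<And>x y. x\<in>pcar P0 \<Longrightarrow> y\<in>pcar P0 \<Longrightarrow> grid_le (r x) (r y) \<longleftrightarrow> grid_le x y"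
    "r ` pcar P0 \<subseteq> pcar P"
  shows "ximg r As \<in> pcar (xi P)"
  using xi_chain_ximg[of P0 As P "pcar P0" r] assms by (auto simp: xi_chain_def)

lemma emb_mp: "grid_le (map_prod (coface i) id x) (map_prod (coface i) id y) \<longleftrightarrow> grid_le x y"
  "grid_le (map_prod id (coface i) x) (map_prod id (coface i) y) \<longleftrightarrow> grid_le x y"
  "grid_le (eH j x) (eH j y) \<longleftrightarrow> grid_le x y"
  "grid_le (eV j x) (eV j y) \<longleftrightarrow> grid_le x y"
  "grid_le (sw x) (sw y) \<longleftrightarrow> grid_le x y"
  by (auto simp: grid_le_def map_prod_def split_beta eH_def eV_def sw_def)

lemma pbk_undef:
  assumes "\<And>As. As \<in> pcar (xi P2) \<Longrightarrow> ximg g As \<notin> pcar (xi P1)"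
  shows "pbk P2 g (pbk P1 e Z) = (\<lambda>_ _. undefined)"
  using assms by (auto simp: pbk_def fun_eq_iff)

lemma pbk_inner: "pbk P1 e (\<lambda>Bs As. Z (ximg r Bs) (ximg r As)) = pbk P1 (r \<circ> e) Z"
  unfolding pbk_def ximg_comp by (rule refl)

lemma ext_case:
  assumes hyp: "pbk P1 \<alpha> x = pbk P1 e F" and P1: "ple P1 = grid_le"
    and c: "xi_chain P0 As" "xi_chain P0 Bs" "set Bs \<subseteq> set As" "last As \<subseteq> U'"
    and P0: "ple P0 = grid_le"
    and emb: "\<And>x y. x\<in>U' \<inter> pcar P0 \<Longrightarrow> y\<in>U' \<inter> pcar P0 \<Longrightarrow> grid_le (r x) (r y) \<longleftrightarrow> grid_le x y"
    and into: "r ` (U' \<inter> pcar P0) \<subseteq> pcar P1"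
    and rf: "\<And>y. y \<in> U' \<inter> pcar P0 \<Longrightarrow> s y = \<alpha> (r y)"
    and rg: "\<And>y. y \<in> U' \<inter> pcar P0 \<Longrightarrow> id y = e (r y)"
  shows "x (ximg s Bs) (ximg s As) = F Bs As"
proof -
  have "x (ximg s Bs) (ximg s As) = F (ximg id Bs) (ximg id As)"
    by (rule face_cons[OF hyp P1 c P0 emb into rf rg])
  then show ?thesis using ximg_id_chain c by metis
qed

lemma cf_ne'[simp]: "j \<noteq> coface j x" by (auto simp: coface_def)

lemma Skmn_simps[simp]:
  "pcar (Skmn k n m) = {As \<in> pcar (xi (hat_check n m)). in_subcomplex k n m (last As)}"
  "ple (Skmn k n m) = ple (xi (hat_check n m))"
  "pwe (Skmn k n m) = pwe (xi (hat_check n m))"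
  by (simp_all add: Skmn_def)

lemma rH_emb: "fst p \<noteq> j \<Longrightarrow> fst q \<noteq> j \<Longrightarrow> grid_le (rH j p) (rH j q) \<longleftrightarrow> grid_le p q"
  by (auto simp: rH_def grid_le_def cd_le_iff)
lemma rV_emb: "snd p \<noteq> i \<Longrightarrow> snd q \<noteq> i \<Longrightarrow> grid_le (rV i p) (rV i q) \<longleftrightarrow> grid_le p q"
  by (auto simp: rV_def grid_le_def cd_le_iff)
lemma rH_into: "j \<le> n \<Longrightarrow> rH j ` ({p. fst p \<noteq> j} \<inter> ({0..n}\<times>{0..m})) \<subseteq> {0..m}\<times>{0..n-1}"
  by (auto simp: rH_def codeg_def)
lemma rV_into: "i \<le> m \<Longrightarrow> rV i ` ({p. snd p \<noteq> i} \<inter> ({0..n}\<times>{0..m})) \<subseteq> {0..m-1}\<times>{0..n}"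
  by (auto simp: rV_def codeg_def)
lemma eH_into: "1 \<le> n \<Longrightarrow> eH j ` ({0..m}\<times>{0..n-1}) \<subseteq> {0..n}\<times>{0..m}"
  by (auto simp: eH_def intro!: cf_bound)
lemma eV_into: "1 \<le> m \<Longrightarrow> eV i ` ({0..m-1}\<times>{0..n}) \<subseteq> {0..n}\<times>{0..m}"
  by (auto simp: eV_def intro!: cf_bound)
lemma sw_into: "sw ` (A \<times> B) \<subseteq> B \<times> A" by (auto simp: sw_def)
lemma mp2_into: "1 \<le> N \<Longrightarrow> map_prod id (coface i) ` ({0..a}\<times>{0..N-1}) \<subseteq> {0..a}\<times>{0..N}"
  by (auto intro!: cf_bound)
lemma mp1_into: "1 \<le> N \<Longrightarrow> map_prod (coface i) id ` ({0..N-1}\<times>{0..a}) \<subseteq> {0..N}\<times>{0..a}"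
  by (auto intro!: cf_bound)

lemma eH_rH: "fst y \<noteq> j \<Longrightarrow> eH j (rH j y) = y" by (simp add: eH_def rH_def cf_cd)
lemma eV_rV: "snd y \<noteq> i \<Longrightarrow> eV i (rV i y) = y" by (simp add: eV_def rV_def cf_cd)
lemma rH_eH[simp]: "rH j (eH j y) = y" by (simp add: eH_def rH_def)
lemma rV_eV[simp]: "rV i (eV i y) = y" by (simp add: eV_def rV_def)
lemma sw_rH: "fst y \<noteq> j \<Longrightarrow> map_prod id (coface j) (rH j y) = sw y" by (simp add: sw_def rH_def cf_cd)
lemma sw_rV: "snd y \<noteq> i \<Longrightarrow> map_prod (coface i) id (rV i y) = sw y" by (simp add: sw_def rV_def cf_cd)

lemma chain_box: "xi_chain (hat_check n m) As \<Longrightarrow> last As \<subseteq> {0..n}\<times>{0..m}"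
  by (auto simp: xi_chain_def)

lemma landH:
  assumes "1 \<le> n" "j \<le> n" "j \<noteq> k" "xi_chain (check_hat m (n-1)) As"
  shows "ximg (eH j) As \<in> pcar (Skmn k n m)"
proof -
  have c: "ximg (eH j) As \<in> pcar (xi (hat_check n m))"
    by (rule land_box[OF assms(4)]) (use emb_mp eH_into[OF assms(1)] in auto)
  have ne: "As \<noteq> []" using assms(4) by (simp add: xi_chain_def)
  have L: "eH j ` last As \<subseteq> {0..n}\<times>{0..m}" using chain_box[of n m "ximg (eH j) As"] c ne by simp
  have "fst ` eH j ` last As \<subseteq> {0..n} - {j}"
  proof
    fix a assume "a \<in> fst ` eH j ` last As"
    then obtain z where z: "z \<in> last As" "a = fst (eH j z)" by auto
    then have "a \<in> {0..n}" using L by force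
    moreover have "a \<noteq> j" using z by (simp add: eH_def)
    ultimately show "a \<in> {0..n} - {j}" by simp
  qed
  then have "fst ` last (ximg (eH j) As) \<noteq> {0..n} \<and> fst ` last (ximg (eH j) As) \<noteq> {0..n} - {k}"
    using ne assms(2,3) by auto
  then show ?thesis using c by (simp add: in_subcomplex_def)
qed

lemma landV:
  assumes "1 \<le> m" "i \<le> m" "xi_chain (check_hat (m-1) n) As"
  shows "ximg (eV i) As \<in> pcar (Skmn k n m)"
proof -
  have c: "ximg (eV i) As \<in> pcar (xi (hat_check n m))"
    by (rule land_box[OF assms(3)]) (use emb_mp eV_into[OF assms(1)] in auto)
  have ne: "As \<noteq> []" using assms(3) by (simp add: xi_chain_def)
  have "i \<notin> snd ` eV i ` last As" by (auto simp: eV_def)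
  then have "snd ` last (ximg (eV i) As) \<noteq> {0..m}" using ne assms(2) by auto
  then show ?thesis using c by (simp add: in_subcomplex_def)
qed

lemma relfun_yH:
  assumes F: "relfun (Skmn k n m) M F" and "1 \<le> n" "j \<le> n" "j \<noteq> k"
  shows "relfun (xi (check_hat m (n-1))) M (pbk (check_hat m (n-1)) (eH j) F)"
proof (rule relfun_pbk_gen[OF F, where P="hat_check n m"])
  show "pcar (Skmn k n m) \<subseteq> pcar (xi (hat_check n m))" by auto
  show "eH j ` pcar (check_hat m (n - 1)) \<subseteq> pcar (hat_check n m)" using eH_into[OF assms(2)] by simp
  fix As assume "xi_chain (check_hat m (n - 1)) As"
  then show "ximg (eH j) As \<in> pcar (Skmn k n m)" using landH assms by blast
qed (auto simp: emb_mp eH_def grid_le_def)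

lemma relfun_bV:
  assumes F: "relfun (Skmn k n m) M F" and "1 \<le> m" "i \<le> m"
  shows "relfun (xi (check_hat (m-1) n)) M (pbk (check_hat (m-1) n) (eV i) F)"
proof (rule relfun_pbk_gen[OF F, where P="hat_check n m"])
  show "pcar (Skmn k n m) \<subseteq> pcar (xi (hat_check n m))" by auto
  show "eV i ` pcar (check_hat (m-1) n) \<subseteq> pcar (hat_check n m)" using eV_into[OF assms(2)] by simp
  fix As assume "xi_chain (check_hat (m-1) n) As"
  then show "ximg (eV i) As \<in> pcar (Skmn k n m)" using landV assms by blast
qed (auto simp: emb_mp eV_def grid_le_def)

lemma K2:
  assumes "2 \<le> n" "i < j" "j \<le> n"
  shows "vface m (n-1) i (pbk (check_hat m (n-1)) (eH j) F) =
         vface m (n-1) (j-1) (pbk (check_hat m (n-1)) (eH i) F)"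
proof -
  have ld: "ximg (map_prod id (coface l)) As \<in> pcar (xi (check_hat m (n-1)))"
    if "As \<in> pcar (xi (check_hat m (n-1-1)))" for l As
    using that mp2_into[of "n-1" l m] assms(1)
    by (intro land_box[of "check_hat m (n-1-1)"]) (auto simp: emb_mp)
  have "vface m (n-1) i (pbk (check_hat m (n-1)) (eH j) F) =
        pbk (check_hat m (n-1-1)) (eH j \<circ> map_prod id (coface i)) F"
    unfolding vface_def NXmap_pbk by (rule pbk_comp[OF ld])
  also have "\<dots> = pbk (check_hat m (n-1-1)) (eH i \<circ> map_prod id (coface (j-1))) F"
    by (rule pbk_cong) (simp add: eH_def cf_cf[OF assms(2)])
  also have "\<dots> = vface m (n-1) (j-1) (pbk (check_hat m (n-1)) (eH i) F)"
    unfolding vface_def NXmap_pbk by (rule pbk_comp[OF ld, symmetric])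
  finally show ?thesis .
qed

lemma K3:
  assumes "2 \<le> m" "i < j" "j \<le> m"
  shows "hface (m-1) n i (pbk (check_hat (m-1) n) (eV j) F) =
         hface (m-1) n (j-1) (pbk (check_hat (m-1) n) (eV i) F)"
proof -
  have ld: "ximg (map_prod (coface l) id) As \<in> pcar (xi (check_hat (m-1) n))"
    if "As \<in> pcar (xi (check_hat (m-1-1) n))" for l As
    using that mp1_into[of "m-1" l n] assms(1)
    by (intro land_box[of "check_hat (m-1-1) n"]) (auto simp: emb_mp)
  have "hface (m-1) n i (pbk (check_hat (m-1) n) (eV j) F) =
        pbk (check_hat (m-1-1) n) (eV j \<circ> map_prod (coface i) id) F"
    unfolding hface_def NXmap_pbk by (rule pbk_comp[OF ld])
  also have "\<dots> = pbk (check_hat (m-1-1) n) (eV i \<circ> map_prod (coface (j-1)) id) F"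
    by (rule pbk_cong) (simp add: eV_def cf_cf[OF assms(2)])
  also have "\<dots> = hface (m-1) n (j-1) (pbk (check_hat (m-1) n) (eV i) F)"
    unfolding hface_def NXmap_pbk by (rule pbk_comp[OF ld, symmetric])
  finally show ?thesis .
qed

lemma K3one: "hface 0 n 0 (pbk (check_hat 0 n) e F) = (\<lambda>_ _. undefined)"
  unfolding hface_def NXmap_pbk
proof (rule pbk_undef)
  fix As assume As: "As \<in> pcar (xi (check_hat (0 - 1) n))"
  then have c: "xi_chain (check_hat 0 n) As" by simp
  then have ne: "As \<noteq> []" and hne: "hd As \<noteq> {}" by (auto simp: xi_chain_def)
  then obtain p where p: "p \<in> hd As" by blast
  let ?X = "ximg (map_prod (coface 0) id) As"
  have q: "map_prod (coface 0) id p \<in> hd ?X" using p ne by simp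
  have H: "hd ?X \<in> set ?X" using ne by (metis hd_in_set ximg_Nil_iff)
  show "?X \<notin> pcar (xi (check_hat 0 n))"
  proof
    assume "?X \<in> pcar (xi (check_hat 0 n))"
    then have "xi_chain (check_hat 0 n) ?X" by simp
    then have "hd ?X \<subseteq> {0..0}\<times>{0..n}" using H unfolding xi_chain_def check_hat_simps by blast
    then have "map_prod (coface 0) id p \<in> {0..0}\<times>{0..n}" using q by blast
    then show False by (cases p) (simp add: coface_def)
  qed
qed

lemma K4:
  assumes "1 \<le> m" "1 \<le> n"
  shows "vface (m-1) n j (pbk (check_hat (m-1) n) (eV i) F) =
         hface m (n-1) i (pbk (check_hat m (n-1)) (eH j) F)"
proof -
  have ld1: "ximg (map_prod id (coface j)) As \<in> pcar (xi (check_hat (m-1) n))"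
    if "As \<in> pcar (xi (check_hat (m-1) (n-1)))" for As
    using that mp2_into[of n j "m-1"] assms
    by (intro land_box[of "check_hat (m-1) (n-1)"]) (auto simp: emb_mp)
  have ld2: "ximg (map_prod (coface i) id) As \<in> pcar (xi (check_hat m (n-1)))"
    if "As \<in> pcar (xi (check_hat (m-1) (n-1)))" for As
    using that mp1_into[of m i "n-1"] assms
    by (intro land_box[of "check_hat (m-1) (n-1)"]) (auto simp: emb_mp)
  have "vface (m-1) n j (pbk (check_hat (m-1) n) (eV i) F) =
        pbk (check_hat (m-1) (n-1)) (eV i \<circ> map_prod id (coface j)) F"
    unfolding vface_def NXmap_pbk by (rule pbk_comp[OF ld1])
  also have "\<dots> = pbk (check_hat (m-1) (n-1)) (eH j \<circ> map_prod (coface i) id) F"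
    by (rule pbk_cong) (simp add: eV_def eH_def)
  also have "\<dots> = hface m (n-1) i (pbk (check_hat m (n-1)) (eH j) F)"
    unfolding hface_def NXmap_pbk by (rule pbk_comp[OF ld2, symmetric])
  finally show ?thesis .
qed

lemma dirA:
  assumes RF: "reedy_fibrant_NX M" and n: "1 \<le> n" "k \<le> n" and F: "relfun (Skmn k n m) M F"
  shows "\<exists>G. relfun (xi (hat_check n m)) M G \<and>
               (\<forall>Bs\<in>pcar (Skmn k n m). \<forall>As\<in>pcar (Skmn k n m).
                   ple (Skmn k n m) Bs As \<longrightarrow> G Bs As = F Bs As)"
proof -
  define y where "y = (\<lambda>j. pbk (check_hat m (n-1)) (eH j) F)"
  define b0 where "b0 = (\<lambda>i. pbk (check_hat (m-1) n) (eV i) F)"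
  define bb where "bb = (if m = 0 then (\<lambda>i. undefined) else (\<lambda>i. if i \<le> m then b0 i else undefined))"
  have kan: "kan_fibration (NX M m) (vface m) (Match M m) (match_face m) (match_map m)"
    using RF unfolding reedy_fibrant_NX_def by blast
  have h1: "\<forall>j\<le>n. j \<noteq> k \<longrightarrow> y j \<in> NX M m (n - 1)"
    unfolding y_def NX_def using relfun_yH[OF F n(1)] by blast
  have h2: "\<forall>i j. i < j \<longrightarrow> j \<le> n \<longrightarrow> i \<noteq> k \<longrightarrow> j \<noteq> k \<longrightarrow>
      vface m (n - 1) i (y j) = vface m (n - 1) (j - 1) (y i)"
  proof (intro allI impI)
    fix i j assume a: "i < j" "j \<le> n" "i \<noteq> k" "j \<noteq> k"
    have "2 \<le> n" using a n by arith
    then show "vface m (n - 1) i (y j) = vface m (n - 1) (j - 1) (y i)"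
      unfolding y_def by (rule K2[OF _ a(1,2)])
  qed
  have h3: "bb \<in> Match M m n"
  proof (cases "m = 0")
    case True then show ?thesis by (simp add: bb_def Match_def)
  next
    case False
    have mem: "\<forall>i\<le>m. bb i \<in> NX M (m-1) n"
      using relfun_bV[OF F] False unfolding bb_def b0_def NX_def by auto
    have und: "\<forall>i>m. bb i = undefined" using False unfolding bb_def by auto
    have comp: "\<forall>i j. i < j \<longrightarrow> j \<le> m \<longrightarrow> hface (m - 1) n i (bb j) = hface (m - 1) n (j - 1) (bb i)"
    proof (intro allI impI)
      fix i j assume a: "i < j" "j \<le> m"
      have bbj: "bb j = b0 j" "bb i = b0 i" using a False by (auto simp: bb_def)
      show "hface (m - 1) n i (bb j) = hface (m - 1) n (j - 1) (bb i)"
      proof (cases "m = 1")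
        case True
        then have "i = 0" "j = 1" using a by auto
        then show ?thesis using True bbj unfolding b0_def by (simp only: K3one diff_self_eq_0 One_nat_def)
      next
        case False
        then have "2 \<le> m" using \<open>m \<noteq> 0\<close> by linarith
        then show ?thesis using bbj K3[OF _ a] unfolding b0_def by simp
      qed
    qed
    show ?thesis unfolding Match_def using False mem und comp by simp
  qed
  have h4: "\<forall>j\<le>n. j \<noteq> k \<longrightarrow> match_face m n j bb = match_map m (n - 1) (y j)"
  proof (intro allI impI)
    fix j assume j: "j \<le> n" "j \<noteq> k"
    show "match_face m n j bb = match_map m (n - 1) (y j)"
    proof (cases "m = 0")
      case True then show ?thesis by (simp add: match_face_def match_map_def)
    next
      case False
      have "vface (m-1) n j (bb i) = hface m (n-1) i (y j)" if "i \<le> m" for i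
        using that False K4[of m n j i F] n(1) unfolding bb_def b0_def y_def by simp
      then show ?thesis using False unfolding match_face_def match_map_def by auto
    qed
  qed
  obtain x where x: "x \<in> NX M m n" "\<forall>j\<le>n. j \<noteq> k \<longrightarrow> vface m n j x = y j" "match_map m n x = bb"
    using kan[unfolded kan_fibration_def, rule_format, OF n(1) n(2) h1[rule_format] h2[rule_format] h3 h4[rule_format]] by blast
  define G where "G = pbk (hat_check n m) sw x"
  have xr: "relfun (xi (check_hat m n)) M x" using x(1) by (simp add: NX_def)
  have Gr: "relfun (xi (hat_check n m)) M G" unfolding G_def
    by (rule relfun_pbk[OF xr]) (auto simp: emb_mp sw_def grid_le_def)
  have ext: "G Bs As = F Bs As"
    if BA: "Bs \<in> pcar (Skmn k n m)" "As \<in> pcar (Skmn k n m)" "ple (Skmn k n m) Bs As" for Bs As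
  proof -
    have cA: "xi_chain (hat_check n m) As" and cB: "xi_chain (hat_check n m) Bs"
      and sub: "set Bs \<subseteq> set As" and isc: "in_subcomplex k n m (last As)"
      using BA by auto
    have G_eq: "G Bs As = x (ximg sw Bs) (ximg sw As)"
      unfolding G_def using cA cB sub by (simp add: pbk_app)
    have L: "last As \<subseteq> {0..n}\<times>{0..m}" using chain_box[OF cA] .
    have P0le: "ple (hat_check n m) = grid_le" by simp
    from isc consider (H) "fst ` last As \<noteq> {0..n} \<and> fst ` last As \<noteq> {0..n} - {k}"
      | (V) "snd ` last As \<noteq> {0..m}" unfolding in_subcomplex_def by blast
    then show ?thesis
    proof cases
      case H
      obtain j where j: "j \<le> n" "j \<noteq> k" "j \<notin> fst ` last As"
      proof -
        have sb: "fst ` last As \<subseteq> {0..n}" using L by auto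
        have "\<not> ({0..n} - {k} \<subseteq> fst ` last As)"
        proof
          assume a: "{0..n} - {k} \<subseteq> fst ` last As"
          have "fst ` last As = {0..n} - {k} \<or> fst ` last As = {0..n}"
            using a sb by (cases "k \<in> fst ` last As") auto
          then show False using H by blast
        qed
        then obtain j where "j \<in> {0..n} - {k}" "j \<notin> fst ` last As" by blast
        then show ?thesis using that by auto
      qed
      have hyp: "pbk (check_hat m (n-1)) (map_prod id (coface j)) x = pbk (check_hat m (n-1)) (eH j) F"
        using x(2) j unfolding vface_def NXmap_pbk y_def by simp
      have P1le: "ple (check_hat m (n-1)) = grid_le" by simp
      have lU: "last As \<subseteq> {p. fst p \<noteq> j}" using j(3) by force
      have emb: "\<And>p q. p \<in> {p. fst p \<noteq> j} \<inter> pcar (hat_check n m) \<Longrightarrow> q \<in> {p. fst p \<noteq> j} \<inter> pcar (hat_check n m) \<Longrightarrow>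
          grid_le (rH j p) (rH j q) \<longleftrightarrow> grid_le p q" using rH_emb by blast
      have into: "rH j ` ({p. fst p \<noteq> j} \<inter> pcar (hat_check n m)) \<subseteq> pcar (check_hat m (n-1))"
        using rH_into[OF j(1), of m] by simp
      have rf: "\<And>p. p \<in> {p. fst p \<noteq> j} \<inter> pcar (hat_check n m) \<Longrightarrow> sw p = map_prod id (coface j) (rH j p)"
        using sw_rH by simp
      have rg: "\<And>p. p \<in> {p. fst p \<noteq> j} \<inter> pcar (hat_check n m) \<Longrightarrow> id p = eH j (rH j p)"
        using eH_rH by simp
      have "x (ximg sw Bs) (ximg sw As) = F Bs As"
        by (rule ext_case[OF hyp P1le cA cB sub lU P0le emb into rf rg])
      then show ?thesis using G_eq by simp
    next
      case V
      have sb: "snd ` last As \<subseteq> {0..m}" using L by auto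
      have "\<not> {0..m} \<subseteq> snd ` last As" using V sb by blast
      then obtain i where i0: "i \<in> {0..m}" "i \<notin> snd ` last As" by blast
      then have i: "i \<le> m" "i \<notin> snd ` last As" by auto
      have ne: "last As \<noteq> {}" using cA by (auto simp: xi_chain_def)
      have m1: "m \<noteq> 0"
      proof
        assume "m = 0"
        then have "snd ` last As = {0..m}" using sb ne by (auto simp: image_iff) force
        then show False using V by blast
      qed
      have "match_map m n x i = bb i" using x(3) by simp
      then have "hface m n i x = b0 i" using m1 i(1) unfolding match_map_def bb_def by simp
      then have hyp: "pbk (check_hat (m-1) n) (map_prod (coface i) id) x = pbk (check_hat (m-1) n) (eV i) F"
        unfolding hface_def NXmap_pbk b0_def by simp
      have P1le: "ple (check_hat (m-1) n) = grid_le" by simp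
      have lU: "last As \<subseteq> {p. snd p \<noteq> i}" using i(2) by force
      have emb: "\<And>p q. p \<in> {p. snd p \<noteq> i} \<inter> pcar (hat_check n m) \<Longrightarrow> q \<in> {p. snd p \<noteq> i} \<inter> pcar (hat_check n m) \<Longrightarrow>
          grid_le (rV i p) (rV i q) \<longleftrightarrow> grid_le p q" using rV_emb by blast
      have into: "rV i ` ({p. snd p \<noteq> i} \<inter> pcar (hat_check n m)) \<subseteq> pcar (check_hat (m-1) n)"
        using rV_into[OF i(1), of n] by simp
      have rf: "\<And>p. p \<in> {p. snd p \<noteq> i} \<inter> pcar (hat_check n m) \<Longrightarrow> sw p = map_prod (coface i) id (rV i p)"
        using sw_rV by simp
      have rg: "\<And>p. p \<in> {p. snd p \<noteq> i} \<inter> pcar (hat_check n m) \<Longrightarrow> id p = eV i (rV i p)"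
        using eV_rV by simp
      have "x (ximg sw Bs) (ximg sw As) = F Bs As"
        by (rule ext_case[OF hyp P1le cA cB sub lU P0le emb into rf rg])
      then show ?thesis using G_eq by simp
    qed
  qed
  show ?thesis using Gr ext by blast
qed

lemma consHH:
  assumes hc: "vface p (q-1) j (Y j') = vface p (q-1) (j'-1) (Y j)" and jj: "j < j'" "j' \<le> q"
    and c: "xi_chain (hat_check q p) As" "xi_chain (hat_check q p) Bs" "set Bs \<subseteq> set As"
      "last As \<subseteq> {x. fst x \<noteq> j} \<inter> {x. fst x \<noteq> j'}"
  shows "Y j' (ximg (rH j') Bs) (ximg (rH j') As) = Y j (ximg (rH j) Bs) (ximg (rH j) As)"
proof -
  have hyp: "pbk (check_hat p (q-1-1)) (map_prod id (coface j)) (Y j') =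
             pbk (check_hat p (q-1-1)) (map_prod id (coface (j'-1))) (Y j)"
    using hc unfolding vface_def NXmap_pbk .
  let ?t = "\<lambda>x::nat\<times>nat. (snd x, codeg j (codeg j' (fst x)))"
  let ?U = "{x::nat\<times>nat. fst x \<noteq> j} \<inter> {x. fst x \<noteq> j'}"
  show ?thesis
  proof (rule face_cons[OF hyp _ c, where t="?t"])
    show "ple (check_hat p (q - 1 - 1)) = grid_le" by simp
    show "ple (hat_check q p) = grid_le" by simp
    show "grid_le (?t x) (?t y) = grid_le x y"
      if "x \<in> ?U \<inter> pcar (hat_check q p)" "y \<in> ?U \<inter> pcar (hat_check q p)" for x y
      using that jj by (auto simp: grid_le_def cd2_le_iff)
    show "?t ` (?U \<inter> pcar (hat_check q p)) \<subseteq> pcar (check_hat p (q - 1 - 1))"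
      using jj by (auto simp: codeg_def)
    show "rH j' x = map_prod id (coface j) (?t x)" if "x \<in> ?U \<inter> pcar (hat_check q p)" for x
      using that jj by (simp add: rH_def cd2_a)
    show "rH j x = map_prod id (coface (j'-1)) (?t x)" if "x \<in> ?U \<inter> pcar (hat_check q p)" for x
      using that jj cd2_b[of "fst x" j j'] by (simp add: rH_def)
  qed
qed

lemma consVV:
  assumes hc: "hface (p-1) q i (B i') = hface (p-1) q (i'-1) (B i)" and ii: "i < i'" "i' \<le> p"
    and c: "xi_chain (hat_check q p) As" "xi_chain (hat_check q p) Bs" "set Bs \<subseteq> set As"
      "last As \<subseteq> {x. snd x \<noteq> i} \<inter> {x. snd x \<noteq> i'}"
  shows "B i' (ximg (rV i') Bs) (ximg (rV i') As) = B i (ximg (rV i) Bs) (ximg (rV i) As)"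
proof -
  have hyp: "pbk (check_hat (p-1-1) q) (map_prod (coface i) id) (B i') =
             pbk (check_hat (p-1-1) q) (map_prod (coface (i'-1)) id) (B i)"
    using hc unfolding hface_def NXmap_pbk .
  let ?t = "\<lambda>x::nat\<times>nat. (codeg i (codeg i' (snd x)), fst x)"
  let ?U = "{x::nat\<times>nat. snd x \<noteq> i} \<inter> {x. snd x \<noteq> i'}"
  show ?thesis
  proof (rule face_cons[OF hyp _ c, where t="?t"])
    show "ple (check_hat (p - 1 - 1) q) = grid_le" by simp
    show "ple (hat_check q p) = grid_le" by simp
    show "grid_le (?t x) (?t y) = grid_le x y"
      if "x \<in> ?U \<inter> pcar (hat_check q p)" "y \<in> ?U \<inter> pcar (hat_check q p)" for x y
      using that ii by (auto simp: grid_le_def cd2_le_iff)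
    show "?t ` (?U \<inter> pcar (hat_check q p)) \<subseteq> pcar (check_hat (p - 1 - 1) q)"
      using ii by (auto simp: codeg_def)
    show "rV i' x = map_prod (coface i) id (?t x)" if "x \<in> ?U \<inter> pcar (hat_check q p)" for x
      using that ii by (simp add: rV_def cd2_a)
    show "rV i x = map_prod (coface (i'-1)) id (?t x)" if "x \<in> ?U \<inter> pcar (hat_check q p)" for x
      using that ii cd2_b[of "snd x" i i'] by (simp add: rV_def)
  qed
qed

lemma consHV:
  assumes hc: "vface (p-1) q j (B i) = hface p (q-1) i (Y j)" and ij: "i \<le> p" "j \<le> q"
    and c: "xi_chain (hat_check q p) As" "xi_chain (hat_check q p) Bs" "set Bs \<subseteq> set As"
      "last As \<subseteq> {x. fst x \<noteq> j} \<inter> {x. snd x \<noteq> i}"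
  shows "Y j (ximg (rH j) Bs) (ximg (rH j) As) = B i (ximg (rV i) Bs) (ximg (rV i) As)"
proof -
  have hyp: "pbk (check_hat (p-1) (q-1)) (map_prod (coface i) id) (Y j) =
             pbk (check_hat (p-1) (q-1)) (map_prod id (coface j)) (B i)"
    using hc[symmetric] unfolding vface_def hface_def NXmap_pbk .
  let ?t = "\<lambda>x::nat\<times>nat. (codeg i (snd x), codeg j (fst x))"
  let ?U = "{x::nat\<times>nat. fst x \<noteq> j} \<inter> {x. snd x \<noteq> i}"
  show ?thesis
  proof (rule face_cons[OF hyp _ c, where t="?t"])
    show "ple (check_hat (p - 1) (q - 1)) = grid_le" by simp
    show "ple (hat_check q p) = grid_le" by simp
    show "grid_le (?t x) (?t y) = grid_le x y"
      if "x \<in> ?U \<inter> pcar (hat_check q p)" "y \<in> ?U \<inter> pcar (hat_check q p)" for x y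
      using that by (auto simp: grid_le_def cd_le_iff)
    show "?t ` (?U \<inter> pcar (hat_check q p)) \<subseteq> pcar (check_hat (p - 1) (q - 1))"
      using ij by (auto simp: codeg_def)
    show "rH j x = map_prod (coface i) id (?t x)" if "x \<in> ?U \<inter> pcar (hat_check q p)" for x
      using that by (simp add: rH_def cf_cd)
    show "rV i x = map_prod id (coface j) (?t x)" if "x \<in> ?U \<inter> pcar (hat_check q p)" for x
      using that by (simp add: rV_def cf_cd)
  qed
qed

lemma face_back:
  assumes Z: "relfun (xi P1) M Z"
    and val: "\<And>Ds Cs. Ds \<in> pcar (xi P1) \<Longrightarrow> Cs \<in> pcar (xi P1) \<Longrightarrow> set Ds \<subseteq> set Cs \<Longrightarrow>
        G (ximg e Ds) (ximg e Cs) = Z (ximg r (ximg e Ds)) (ximg r (ximg e Cs))"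
    and inv: "\<And>x. x \<in> pcar P1 \<Longrightarrow> r (e x) = x"
  shows "pbk P1 e G = Z"
proof -
  have "pbk P1 e G = pbk P1 e (\<lambda>Bs As. Z (ximg r Bs) (ximg r As))"
    by (rule pbk_Zcong) (rule val)
  also have "\<dots> = pbk P1 (r \<circ> e) Z" by (rule pbk_inner)
  also have "\<dots> = pbk P1 id Z" by (rule pbk_cong) (simp add: inv)
  also have "\<dots> = Z" by (rule pbk_id[OF Z])
  finally show ?thesis .
qed

lemma relf_face:
  assumes Zr: "relfun (xi P) M Z" and P: "ple P = grid_le"
    and emb: "\<And>x y. x \<in> D \<inter> pcar (hat_check q p) \<Longrightarrow> y \<in> D \<inter> pcar (hat_check q p) \<Longrightarrow>
                grid_le (r x) (r y) \<longleftrightarrow> grid_le x y"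
    and into: "r ` (D \<inter> pcar (hat_check q p)) \<subseteq> pcar P"
    and we: "\<And>x y. x \<in> D \<inter> pcar (hat_check q p) \<Longrightarrow> y \<in> D \<inter> pcar (hat_check q p) \<Longrightarrow>
                grid_le x y \<Longrightarrow> snd x = snd y \<Longrightarrow> pwe P (r x) (r y)"
    and Wf: "\<And>a b. Wf a b = Z (ximg r a) (ximg r b)"
  shows "relfun ((Skmn k q p)\<lparr>pcar := {a \<in> pcar (Skmn k q p). last a \<subseteq> D}\<rparr>) M
     (\<lambda>a b. if (a \<in> pcar (Skmn k q p) \<and> last a \<subseteq> D) \<and> (b \<in> pcar (Skmn k q p) \<and> last b \<subseteq> D) \<and>
              ple (Skmn k q p) a b then Wf a b else undefined)"
proof -
  let ?R = "(Skmn k q p)\<lparr>pcar := {a \<in> pcar (Skmn k q p). last a \<subseteq> D}\<rparr>"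
  have U: "A \<subseteq> D \<inter> pcar (hat_check q p)" if "As \<in> pcar ?R" "A \<in> set As" for As A
  proof -
    have c: "xi_chain (hat_check q p) As" "last As \<subseteq> D" using that(1) by auto
    show ?thesis using xi_chain_last[OF c(1) that(2)] c(2) xi_chain_pts[OF c(1) that(2)] by blast
  qed
  have R1: "pcar ?R \<subseteq> pcar (xi (hat_check q p))" by auto
  have R2: "ple ?R = ple (xi (hat_check q p))" by simp
  have R3: "pwe ?R = pwe (xi (hat_check q p))" by simp
  have P0: "ple (hat_check q p) = grid_le" by simp
  have we': "pwe P (r x) (r y)" if "x \<in> D \<inter> pcar (hat_check q p)" "y \<in> D \<inter> pcar (hat_check q p)"
     "pwe (hat_check q p) x y" for x y
    using we[OF that(1,2)] that(3) by simp
  have "relfun ?R M (\<lambda>Bs As. if Bs \<in> pcar ?R \<and> As \<in> pcar ?R \<and> set Bs \<subseteq> set As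
                          then Z (ximg r Bs) (ximg r As) else undefined)"
    by (rule relfun_pullback[OF Zr P P0 R1 R2 R3 U emb into we'])
  moreover have "(\<lambda>Bs As. if Bs \<in> pcar ?R \<and> As \<in> pcar ?R \<and> set Bs \<subseteq> set As
                          then Z (ximg r Bs) (ximg r As) else undefined) =
     (\<lambda>a b. if (a \<in> pcar (Skmn k q p) \<and> last a \<subseteq> D) \<and> (b \<in> pcar (Skmn k q p) \<and> last b \<subseteq> D) \<and>
              ple (Skmn k q p) a b then Wf a b else undefined)"
    by (intro ext) (simp add: Wf)
  ultimately show ?thesis by simp
qed

definition Dface :: "nat \<times> bool \<Rightarrow> (nat \<times> nat) set" where
  "Dface f = (if snd f then {x. fst x \<noteq> fst f} else {x. snd x \<noteq> fst f})"
definition rface :: "nat \<times> bool \<Rightarrow> nat \<times> nat \<Rightarrow> nat \<times> nat" where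
  "rface f = (if snd f then rH (fst f) else rV (fst f))"

lemma dirB_kan:
  assumes EXT: "\<forall>F. relfun (Skmn k q p) M F \<longrightarrow>
          (\<exists>G. relfun (xi (hat_check q p)) M G \<and>
               (\<forall>Bs\<in>pcar (Skmn k q p). \<forall>As\<in>pcar (Skmn k q p).
                   ple (Skmn k q p) Bs As \<longrightarrow> G Bs As = F Bs As))"
    and q1: "1 \<le> q" and kq: "k \<le> q"
    and hy: "\<forall>j\<le>q. j \<noteq> k \<longrightarrow> y j \<in> NX M p (q - 1)"
    and hc: "\<forall>i j. i < j \<longrightarrow> j \<le> q \<longrightarrow> i \<noteq> k \<longrightarrow> j \<noteq> k \<longrightarrow>
               vface p (q - 1) i (y j) = vface p (q - 1) (j - 1) (y i)"
    and hb: "b \<in> Match M p q"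
    and hm: "\<forall>j\<le>q. j \<noteq> k \<longrightarrow> match_face p q j b = match_map p (q - 1) (y j)"
  shows "\<exists>x\<in>NX M p q. (\<forall>j\<le>q. j \<noteq> k \<longrightarrow> vface p q j x = y j) \<and> match_map p q x = b"
proof -
  define S where "S = Skmn k q p"
  define \<Phi> :: "(nat \<times> bool) set" where
    "\<Phi> = {(j, True) | j. j \<le> q \<and> j \<noteq> k} \<union> {(i, False) | i. i \<le> p \<and> 0 < p}"
  define Zf where "Zf = (\<lambda>f::nat \<times> bool. if snd f then y (fst f) else b (fst f))"
  define inF where "inF = (\<lambda>f As. last As \<subseteq> Dface f)"
  define W where "W = (\<lambda>f Bs As. Zf f (ximg (rface f) Bs) (ximg (rface f) As))"
  have yr: "relfun (xi (check_hat p (q-1))) M (y j)" if "j \<le> q" "j \<noteq> k" for j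
    using hy that by (simp add: NX_def)
  have bm: "b i \<in> NX M (p-1) q" "\<forall>i>p. b i = undefined"
    "\<forall>i j. i < j \<longrightarrow> j \<le> p \<longrightarrow> hface (p - 1) q i (b j) = hface (p - 1) q (j - 1) (b i)"
    if "p \<noteq> 0" "i \<le> p" for i
    using hb that unfolding Match_def by auto
  have br: "relfun (xi (check_hat (p-1) q)) M (b i)" if "p \<noteq> 0" "i \<le> p" for i
    using bm(1)[OF that] by (simp add: NX_def)
  have hmi: "vface (p-1) q j (b i) = hface p (q-1) i (y j)" if "p \<noteq> 0" "i \<le> p" "j \<le> q" "j \<noteq> k" for i j
  proof -
    have "match_face p q j b i = match_map p (q - 1) (y j) i" using hm that by simp
    then show ?thesis using that unfolding match_face_def match_map_def by simp
  qed
  have Wsimp: "W (j, True) Bs As = y j (ximg (rH j) Bs) (ximg (rH j) As)"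
    "W (j, False) Bs As = b j (ximg (rV j) Bs) (ximg (rV j) As)" for j Bs As
    by (simp_all add: W_def Zf_def rface_def)
  have relf: "relfun (S\<lparr>pcar := {a \<in> pcar S. inF f a}\<rparr>) M
        (\<lambda>a b. if (a \<in> pcar S \<and> inF f a) \<and> (b \<in> pcar S \<and> inF f b) \<and> ple S a b then W f a b else undefined)"
    if f: "f \<in> \<Phi>" for f
  proof -
    from f consider (H) j where "f = (j, True)" "j \<le> q" "j \<noteq> k" | (V) i where "f = (i, False)" "i \<le> p" "0 < p"
      unfolding \<Phi>_def by blast
    then show ?thesis
    proof cases
      case H
      show ?thesis unfolding H(1) S_def inF_def
      proof (rule relf_face[OF yr[OF H(2,3)]])
        show "ple (check_hat p (q - 1)) = grid_le" by simp
        show "grid_le (rH j x) (rH j z) = grid_le x z"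
          if "x \<in> Dface (j, True) \<inter> pcar (hat_check q p)" "z \<in> Dface (j, True) \<inter> pcar (hat_check q p)" for x z
          using that rH_emb by (auto simp: Dface_def)
        show "rH j ` (Dface (j, True) \<inter> pcar (hat_check q p)) \<subseteq> pcar (check_hat p (q - 1))"
          using rH_into[OF H(2), of p] by (simp add: Dface_def)
        show "pwe (check_hat p (q - 1)) (rH j x) (rH j z)"
          if "x \<in> Dface (j, True) \<inter> pcar (hat_check q p)" "z \<in> Dface (j, True) \<inter> pcar (hat_check q p)"
            "grid_le x z" "snd x = snd z" for x z
          using that rH_emb[of x j z] by (simp add: rH_def Dface_def)
        show "W (j, True) a c = y j (ximg (rH j) a) (ximg (rH j) c)" for a c by (rule Wsimp(1))
      qed
    next
      case V
      have p0: "p \<noteq> 0" using V by simp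
      show ?thesis unfolding V(1) S_def inF_def
      proof (rule relf_face[OF br[OF p0 V(2)]])
        show "ple (check_hat (p - 1) q) = grid_le" by simp
        show "grid_le (rV i x) (rV i z) = grid_le x z"
          if "x \<in> Dface (i, False) \<inter> pcar (hat_check q p)" "z \<in> Dface (i, False) \<inter> pcar (hat_check q p)" for x z
          using that rV_emb by (auto simp: Dface_def)
        show "rV i ` (Dface (i, False) \<inter> pcar (hat_check q p)) \<subseteq> pcar (check_hat (p - 1) q)"
          using rV_into[OF V(2), of q] by (simp add: Dface_def)
        show "pwe (check_hat (p - 1) q) (rV i x) (rV i z)"
          if "x \<in> Dface (i, False) \<inter> pcar (hat_check q p)" "z \<in> Dface (i, False) \<inter> pcar (hat_check q p)"
            "grid_le x z" "snd x = snd z" for x z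
          using that rV_emb[of x i z] by (simp add: rV_def Dface_def)
        show "W (i, False) a c = b i (ximg (rV i) a) (ximg (rV i) c)" for a c by (rule Wsimp(2))
      qed
    qed
  qed
  have cover: "\<exists>f\<in>\<Phi>. inF f a" if a: "a \<in> pcar S" for a
  proof -
    have cA: "xi_chain (hat_check q p) a" and isc: "in_subcomplex k q p (last a)"
      using a by (auto simp: S_def)
    have L: "last a \<subseteq> {0..q}\<times>{0..p}" using chain_box[OF cA] .
    from isc consider (H) "fst ` last a \<noteq> {0..q} \<and> fst ` last a \<noteq> {0..q} - {k}"
      | (V) "snd ` last a \<noteq> {0..p}" unfolding in_subcomplex_def by blast
    then show ?thesis
    proof cases
      case H
      have sb: "fst ` last a \<subseteq> {0..q}" using L by auto
      have "\<not> ({0..q} - {k} \<subseteq> fst ` last a)"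
      proof
        assume a: "{0..q} - {k} \<subseteq> fst ` last a"
        have "fst ` last a = {0..q} - {k} \<or> fst ` last a = {0..q}"
          using a sb by (cases "k \<in> fst ` last a") auto
        then show False using H by blast
      qed
      then obtain j where j: "j \<in> {0..q} - {k}" "j \<notin> fst ` last a" by blast
      then have "(j, True) \<in> \<Phi>" unfolding \<Phi>_def by auto
      moreover have "inF (j, True) a" using j(2) by (force simp: inF_def Dface_def)
      ultimately show ?thesis by blast
    next
      case V
      have sb: "snd ` last a \<subseteq> {0..p}" using L by auto
      have "\<not> {0..p} \<subseteq> snd ` last a" using V sb by blast
      then obtain i where i: "i \<in> {0..p}" "i \<notin> snd ` last a" by blast
      have ne: "last a \<noteq> {}" using cA by (auto simp: xi_chain_def)
      have p0: "p \<noteq> 0"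
      proof
        assume "p = 0"
        then have "snd ` last a = {0..p}" using sb ne by (auto simp: image_iff) force
        then show False using V by blast
      qed
      then have "(i, False) \<in> \<Phi>" using i unfolding \<Phi>_def by auto
      moreover have "inF (i, False) a" using i(2) by (force simp: inF_def Dface_def)
      ultimately show ?thesis by blast
    qed
  qed
  have down: "inF f a" if "f \<in> \<Phi>" "a \<in> pcar S" "c \<in> pcar S" "ple S a c" "inF f c" for f a c
  proof -
    have cA: "xi_chain (hat_check q p) c" and ne: "a \<noteq> []" using that(2,3) by (auto simp: S_def xi_chain_def)
    have "last a \<in> set c" using that(4) ne by (auto simp: S_def)
    then have "last a \<subseteq> last c" using xi_chain_last[OF cA] by blast
    then show ?thesis using that(5) by (auto simp: inF_def)
  qed
  have cons: "W f a c = W g a c"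
    if fg: "f \<in> \<Phi>" "g \<in> \<Phi>" and ac: "a \<in> pcar S" "c \<in> pcar S" "ple S a c" and inf: "inF f c" "inF g c"
    for f g a c
  proof -
    have cA: "xi_chain (hat_check q p) c" "xi_chain (hat_check q p) a" "set a \<subseteq> set c"
      using ac by (auto simp: S_def)
    from fg(1) consider (H) j where "f = (j, True)" "j \<le> q" "j \<noteq> k" | (V) i where "f = (i, False)" "i \<le> p" "0 < p"
      unfolding \<Phi>_def by blast
    then show ?thesis
    proof cases
      case H
      from fg(2) consider (H') j' where "g = (j', True)" "j' \<le> q" "j' \<noteq> k"
        | (V') i' where "g = (i', False)" "i' \<le> p" "0 < p"
        unfolding \<Phi>_def by blast
      then show ?thesis
      proof cases
        case H'
        have L: "last c \<subseteq> {x. fst x \<noteq> j} \<inter> {x. fst x \<noteq> j'}" "last c \<subseteq> {x. fst x \<noteq> j'} \<inter> {x. fst x \<noteq> j}"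
          using inf H(1) H'(1) by (auto simp: inF_def Dface_def)
        consider "j = j'" | "j < j'" | "j' < j" by linarith
        then show ?thesis
        proof cases
          case 1 then show ?thesis using H(1) H'(1) by simp
        next
          case 2
          have "y j' (ximg (rH j') a) (ximg (rH j') c) = y j (ximg (rH j) a) (ximg (rH j) c)"
            by (rule consHH[OF _ 2 H'(2) cA L(1)]) (use hc 2 H H' in blast)
          then show ?thesis using H(1) H'(1) by (simp add: Wsimp)
        next
          case 3
          have "y j (ximg (rH j) a) (ximg (rH j) c) = y j' (ximg (rH j') a) (ximg (rH j') c)"
            by (rule consHH[OF _ 3 H(2) cA L(2)]) (use hc 3 H H' in blast)
          then show ?thesis using H(1) H'(1) by (simp add: Wsimp)
        qed
      next
        case V'
        have L: "last c \<subseteq> {x. fst x \<noteq> j} \<inter> {x. snd x \<noteq> i'}"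
          using inf H(1) V'(1) by (auto simp: inF_def Dface_def)
        have h: "vface (p-1) q j (b i') = hface p (q-1) i' (y j)" using hmi V' H by auto
        have "y j (ximg (rH j) a) (ximg (rH j) c) = b i' (ximg (rV i') a) (ximg (rV i') c)"
          by (rule consHV[where B=b and Y=y, OF h V'(2) H(2) cA L])
        then show ?thesis using H(1) V'(1) by (simp add: Wsimp)
      qed
    next
      case V
      have p0: "p \<noteq> 0" using V by simp
      from fg(2) consider (H') j' where "g = (j', True)" "j' \<le> q" "j' \<noteq> k"
        | (V') i' where "g = (i', False)" "i' \<le> p" "0 < p"
        unfolding \<Phi>_def by blast
      then show ?thesis
      proof cases
        case H'
        have L: "last c \<subseteq> {x. fst x \<noteq> j'} \<inter> {x. snd x \<noteq> i}"
          using inf V(1) H'(1) by (auto simp: inF_def Dface_def)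
        have h: "vface (p-1) q j' (b i) = hface p (q-1) i (y j')" using hmi V H' by auto
        have "y j' (ximg (rH j') a) (ximg (rH j') c) = b i (ximg (rV i) a) (ximg (rV i) c)"
          by (rule consHV[where B=b and Y=y, OF h V(2) H'(2) cA L])
        then show ?thesis using V(1) H'(1) by (simp add: Wsimp)
      next
        case V'
        have L: "last c \<subseteq> {x. snd x \<noteq> i} \<inter> {x. snd x \<noteq> i'}" "last c \<subseteq> {x. snd x \<noteq> i'} \<inter> {x. snd x \<noteq> i}"
          using inf V(1) V'(1) by (auto simp: inF_def Dface_def)
        consider "i = i'" | "i < i'" | "i' < i" by linarith
        then show ?thesis
        proof cases
          case 1 then show ?thesis using V(1) V'(1) by simp
        next
          case 2
          have "b i' (ximg (rV i') a) (ximg (rV i') c) = b i (ximg (rV i) a) (ximg (rV i) c)"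
            by (rule consVV[OF _ 2 V'(2) cA L(1)]) (use bm(3)[OF p0 V(2)] 2 V'(2) in blast)
          then show ?thesis using V(1) V'(1) by (simp add: Wsimp)
        next
          case 3
          have "b i (ximg (rV i) a) (ximg (rV i) c) = b i' (ximg (rV i') a) (ximg (rV i') c)"
            by (rule consVV[OF _ 3 V(2) cA L(2)]) (use bm(3)[OF p0 V(2)] 3 V(2) in blast)
          then show ?thesis using V(1) V'(1) by (simp add: Wsimp)
        qed
      qed
    qed
  qed
  have refl: "ple S a a" if "a \<in> pcar S" for a by (simp add: S_def)
  have trans: "ple S a c" if "a \<in> pcar S" "b' \<in> pcar S" "c \<in> pcar S" "ple S a b'" "ple S b' c" for a b' c
    using that by (auto simp: S_def)
  have wele: "ple S a c" if "a \<in> pcar S" "c \<in> pcar S" "pwe S a c" for a c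
    using that by (auto simp: S_def)
  define Fg where "Fg = (\<lambda>a c. if a \<in> pcar S \<and> c \<in> pcar S \<and> ple S a c
                          then (SOME v. \<exists>f\<in>\<Phi>. inF f c \<and> v = W f a c) else undefined)"
  have Fr: "relfun S M Fg" unfolding Fg_def
    by (rule relfun_glue[OF relf cover down cons refl trans wele])
  obtain G where Gr: "relfun (xi (hat_check q p)) M G"
    and Gext: "\<And>Bs As. Bs \<in> pcar S \<Longrightarrow> As \<in> pcar S \<Longrightarrow> ple S Bs As \<Longrightarrow> G Bs As = Fg Bs As"
    using EXT Fr unfolding S_def by blast
  have GW: "G a c = W f a c" if "f \<in> \<Phi>" "a \<in> pcar S" "c \<in> pcar S" "ple S a c" "inF f c" for f a c
    using Gext[OF that(2-4)] glue_val[where W=W and inF=inF, OF cons that] that(2-4) by (simp add: Fg_def)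
  define x where "x = pbk (check_hat p q) sw G"
  have xr: "relfun (xi (check_hat p q)) M x" unfolding x_def
    by (rule relfun_pbk[OF Gr]) (auto simp: emb_mp sw_def grid_le_def)
  have xN: "x \<in> NX M p q" using xr by (simp add: NX_def)
  have vf: "vface p q j x = y j" if j: "j \<le> q" "j \<noteq> k" for j
  proof -
    have ld: "ximg (map_prod id (coface j)) As \<in> pcar (xi (check_hat p q))"
      if "As \<in> pcar (xi (check_hat p (q-1)))" for As
      using that mp2_into[of q j p] q1
      by (intro land_box[of "check_hat p (q-1)"]) (auto simp: emb_mp)
    have "vface p q j x = pbk (check_hat p (q-1)) (sw \<circ> map_prod id (coface j)) G"
      unfolding vface_def NXmap_pbk x_def by (rule pbk_comp[OF ld])
    also have "\<dots> = pbk (check_hat p (q-1)) (eH j) G"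
      by (rule pbk_cong) (simp add: sw_def eH_def)
    also have "\<dots> = y j"
    proof (rule face_back[OF yr[OF j], where r="rH j"])
      fix Ds Cs assume DC: "Ds \<in> pcar (xi (check_hat p (q - 1)))" "Cs \<in> pcar (xi (check_hat p (q - 1)))"
        "set Ds \<subseteq> set Cs"
      have f: "(j, True) \<in> \<Phi>" using j unfolding \<Phi>_def by auto
      have inS: "ximg (eH j) Ds \<in> pcar S" "ximg (eH j) Cs \<in> pcar S"
        using landH[OF q1 j] DC unfolding S_def by auto
      have le: "ple S (ximg (eH j) Ds) (ximg (eH j) Cs)" using DC(3) by (auto simp: S_def)
      have ne: "Cs \<noteq> []" using DC(2) by (simp add: xi_chain_def)
      have inf: "inF (j, True) (ximg (eH j) Cs)" using ne by (auto simp: inF_def Dface_def eH_def)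
      show "G (ximg (eH j) Ds) (ximg (eH j) Cs) =
            y j (ximg (rH j) (ximg (eH j) Ds)) (ximg (rH j) (ximg (eH j) Cs))"
        using GW[OF f inS le inf] by (simp add: Wsimp)
    qed simp
    finally show ?thesis .
  qed
  have mm: "match_map p q x = b"
  proof (cases "p = 0")
    case True
    then show ?thesis using hb by (simp add: Match_def match_map_def)
  next
    case False
    have hf: "hface p q i x = b i" if i: "i \<le> p" for i
    proof -
      have ld: "ximg (map_prod (coface i) id) As \<in> pcar (xi (check_hat p q))"
        if "As \<in> pcar (xi (check_hat (p-1) q))" for As
        using that mp1_into[of p i q] False
        by (intro land_box[of "check_hat (p-1) q"]) (auto simp: emb_mp)
      have "hface p q i x = pbk (check_hat (p-1) q) (sw \<circ> map_prod (coface i) id) G"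
        unfolding hface_def NXmap_pbk x_def by (rule pbk_comp[OF ld])
      also have "\<dots> = pbk (check_hat (p-1) q) (eV i) G"
        by (rule pbk_cong) (simp add: sw_def eV_def)
      also have "\<dots> = b i"
      proof (rule face_back[OF br[OF False i], where r="rV i"])
        fix Ds Cs assume DC: "Ds \<in> pcar (xi (check_hat (p - 1) q))" "Cs \<in> pcar (xi (check_hat (p - 1) q))"
          "set Ds \<subseteq> set Cs"
        have f: "(i, False) \<in> \<Phi>" using i False unfolding \<Phi>_def by auto
        have p1: "1 \<le> p" using False by simp
        have inS: "ximg (eV i) Ds \<in> pcar S" "ximg (eV i) Cs \<in> pcar S"
          using landV[OF p1 i] DC unfolding S_def by auto
        have le: "ple S (ximg (eV i) Ds) (ximg (eV i) Cs)" using DC(3) by (auto simp: S_def)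
        have ne: "Cs \<noteq> []" using DC(2) by (simp add: xi_chain_def)
        have inf: "inF (i, False) (ximg (eV i) Cs)" using ne by (auto simp: inF_def Dface_def eV_def)
        show "G (ximg (eV i) Ds) (ximg (eV i) Cs) =
              b i (ximg (rV i) (ximg (eV i) Ds)) (ximg (rV i) (ximg (eV i) Cs))"
          using GW[OF f inS le inf] by (simp add: Wsimp)
      qed simp
      finally show ?thesis .
    qed
    have "b i = undefined" if "\<not> i \<le> p" for i using bm(2)[OF False, of 0] that by simp
    then show ?thesis using False hf unfolding match_map_def by (auto simp: fun_eq_iff)
  qed
  show ?thesis using xN vf mm by blast
qed

theorem lemma5p1:
  fixes M :: "('o, 'm) relcat"
  assumes "is_relcat M"
  shows "reedy_fibrant_NX M \<longleftrightarrow>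
    (\<forall>n m k. 1 \<le> n \<longrightarrow> k \<le> n \<longrightarrow>
       (\<forall>F. relfun (Skmn k n m) M F \<longrightarrow>
          (\<exists>G. relfun (xi (hat_check n m)) M G \<and>
               (\<forall>Bs\<in>pcar (Skmn k n m). \<forall>As\<in>pcar (Skmn k n m).
                   ple (Skmn k n m) Bs As \<longrightarrow> G Bs As = F Bs As))))"
proof
  assume RF: "reedy_fibrant_NX M"
  show "\<forall>n m k. 1 \<le> n \<longrightarrow> k \<le> n \<longrightarrow>
       (\<forall>F. relfun (Skmn k n m) M F \<longrightarrow>
          (\<exists>G. relfun (xi (hat_check n m)) M G \<and>
               (\<forall>Bs\<in>pcar (Skmn k n m). \<forall>As\<in>pcar (Skmn k n m).
                   ple (Skmn k n m) Bs As \<longrightarrow> G Bs As = F Bs As)))"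
    using dirA[OF RF] by blast
next
  assume EXT: "\<forall>n m k. 1 \<le> n \<longrightarrow> k \<le> n \<longrightarrow>
       (\<forall>F. relfun (Skmn k n m) M F \<longrightarrow>
          (\<exists>G. relfun (xi (hat_check n m)) M G \<and>
               (\<forall>Bs\<in>pcar (Skmn k n m). \<forall>As\<in>pcar (Skmn k n m).
                   ple (Skmn k n m) Bs As \<longrightarrow> G Bs As = F Bs As)))"
  show "reedy_fibrant_NX M"
    unfolding reedy_fibrant_NX_def kan_fibration_def
  proof (intro allI impI)
    fix p q k y b
    assume q1: "1 \<le> q" and kq: "k \<le> q"
      and hy: "\<forall>j\<le>q. j \<noteq> k \<longrightarrow> y j \<in> NX M p (q - 1)"
      and hc: "\<forall>i j. i < j \<longrightarrow> j \<le> q \<longrightarrow> i \<noteq> k \<longrightarrow> j \<noteq> k \<longrightarrow>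
               vface p (q - 1) i (y j) = vface p (q - 1) (j - 1) (y i)"
      and hb: "b \<in> Match M p q"
      and hm: "\<forall>j\<le>q. j \<noteq> k \<longrightarrow> match_face p q j b = match_map p (q - 1) (y j)"
    have E: "\<forall>F. relfun (Skmn k q p) M F \<longrightarrow>
          (\<exists>G. relfun (xi (hat_check q p)) M G \<and>
               (\<forall>Bs\<in>pcar (Skmn k q p). \<forall>As\<in>pcar (Skmn k q p).
                   ple (Skmn k q p) Bs As \<longrightarrow> G Bs As = F Bs As))"
      using EXT q1 kq by blast
    show "\<exists>x\<in>NX M p q. (\<forall>j\<le>q. j \<noteq> k \<longrightarrow> vface p q j x = y j) \<and> match_map p q x = b"
      by (rule dirB_kan[OF E q1 kq hy hc hb hm])
  qed
qed

end
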